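(* For $j\in\{1,2\}$, $$\sum_{\{U,W\}\in\mathsf P_j}\chi^{\mathsf u_{\rm id},\mathsf v_{\rm id}}=(-\Psi)^{1-N}\sum_{D\in\mathcal D^0}(-2)^{c_2^j(D)-1}\prod_{(a,b)\text{ chord of }D}\chi^{a,b},$$ where $(\mathsf u_{\rm id},\mathsf v_{\rm id})$ is the representative of $\{U,W\}$.
   Context: Graph polynomials. All graphs are finite, may have multiple edges and self-loops, and each edge $e$ has a fixed direction from $\partial_-(e)$ to $\partial_+(e)$. Each edge $e$ carries a variable $\alpha_e$; for $S\subseteq E_G$ put $\alpha_S=\prod_{e\in S}\alpha_e$. $h_1(G)$ is the first Betti number. The Kirchhoff polynomial of a connected graph is $\Psi_G=\sum_T\alpha_{E_G\setminus T}$, summed over spanning trees $T$; for a disconnected graph it is the product over its components. $G/\!\!/S$ denotes contraction of all edges of $S$. A simple cycle $C$ is a connected subgraph in which every vertex has degree $2$; fix one of its two cyclic orientations and set $o_C(e)=+1$ if $e\in C$ is directed along it, $-1$ if against it, and $0$ if $e\notin C$. For $e,f\in E_G$ the cycle polynomial is $\chi_G^{e,f}=\sum_C o_C(e)o_C(f)\Psi_{G/\!\!/C}$, summed over all simple cycles $C$. For words $\mathsf u=u_1\cdots u_k$ and $\mathsf v=v_1\cdots v_k$ whose letters are edges of $G$, with $1\le k\le h_1(G)$, the Dodgson cycle polynomial is $\chi_G^{\mathsf u,\mathsf v}=\Psi_G^{1-k}\sum_{\sigma\in S_k}\operatorname{sgn}(\sigma)\prod_{i=1}^k\chi_G^{u_i,v_{\sigma(i)}}=\Psi_G^{1-k}\det(\chi_G^{u_i,v_j})_{i,j}$.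 Chord diagrams. Let $\Gamma$ be a connected graph with $N:=h_1(\Gamma)\ge1$, and write $\Psi=\Psi_\Gamma$, $\chi^{e,f}=\chi_\Gamma^{e,f}$, $\chi^{\mathsf u,\mathsf v}=\chi_\Gamma^{\mathsf u,\mathsf v}$. Let $D_0$ be a chord diagram without chords: a disjoint union of $\ell\ge1$ cycles (base cycles) of lengths $2n_1,\dots,2n_\ell$, with $n_i\ge1$ and $\sum n_i=N$. A base cycle of length $2$ consists of two parallel edges. Its edges (base edges) are coloured $1$ and $2$ alternately along each base cycle, so every vertex meets exactly one base edge of each colour. Its $2N$ vertices are labelled by pairwise distinct edges of $\Gamma$; $e_w$ denotes the label of vertex $w$. Let $E^1$ and $E^2$ be the sets of base edges of colour $1$ and $2$; each is a perfect matching of $V(D_0)$. A chord is an extra edge (colour $0$) joining two distinct vertices. $\mathcal D^0$ is the set of diagrams obtained from $D_0$ by adding $N$ chords forming a perfect matching of $V(D_0)$. For $D\in\mathcal D^0$ and $j\in\{1,2\}$, $c_2^j(D)$ is the number of connected components that are cycles in the subgraph formed by all chords and all colour-$j$ base edges (a chord parallel to a colour-$j$ base edge counts as a cycle of length $2$). For a chord $(a,b)$ write $\chi^{a,b}:=\chi^{e_a,e_b}$. Words. For $j\in\{1,2\}$, $\mathsf P_j$ is the set of unordered pairs $\{U,W\}$ of disjoint sets with $U\cup W=V(D_0)$ and $|U|=|W|=N$, such that every colour-$j$ base edge has one endpoint in $U$ and one in $W$. Fix an enumeration $(a_1,b_1),\dots,(a_N,b_N)$ of $E^j$. The representative of $\{U,W\}\in\mathsf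 P_j$ is the pair of words $(\mathsf u_{\rm id},\mathsf v_{\rm id})$ of length $N$ whose $k$-th letters are $e_{a_k}$ and $e_{b_k}$: the letter whose vertex lies in $U$ goes into $\mathsf u_{\rm id}$ and the other into $\mathsf v_{\rm id}$. *)

theory Defs
  imports Complex_Main "HOL-Combinatorics.Permutations"
begin

text \<open>A graph is given by a vertex set V, an edge set E and a map ends assigning to each
edge e the pair (tail, head) = (source, target). Multiple edges and self-loops are allowed.\<close>

definition conn :: "('e \<Rightarrow> 'v \<times> 'v) \<Rightarrow> 'e set \<Rightarrow> ('v \<times> 'v) set" where
  "conn ends F = (\<Union>e\<in>F. {ends e, prod.swap (ends e)})\<^sup>*"

definition vrel :: "'v set \<Rightarrow> ('e \<Rightarrow> 'v \<times> 'v) \<Rightarrow> 'e set \<Rightarrow> ('v \<times> 'v) set" where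
  "vrel V ends F = conn ends F \<inter> (V \<times> V)"

definition components :: "'v set \<Rightarrow> 'e set \<Rightarrow> ('e \<Rightarrow> 'v \<times> 'v) \<Rightarrow> 'v set set" where
  "components V E ends = V // vrel V ends E"

definition is_forest :: "('e \<Rightarrow> 'v \<times> 'v) \<Rightarrow> 'e set \<Rightarrow> bool" where
  "is_forest ends F \<longleftrightarrow> (\<forall>e\<in>F. ends e \<notin> conn ends (F - {e}))"

text \<open>spanning trees of the component K (edges of K are those with tail in K)\<close>
definition spanning_trees_comp :: "'e set \<Rightarrow> ('e \<Rightarrow> 'v \<times> 'v) \<Rightarrow> 'v set \<Rightarrow> 'e set set" where
  "spanning_trees_comp E ends K =
     {T. T \<subseteq> {e\<in>E. fst (ends e) \<in> K} \<and> is_forest ends T \<and> (\<forall>x\<in>K. \<forall>y\<in>K. (x, y) \<in> conn ends T)}"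

definition kirchhoff :: "'v set \<Rightarrow> 'e set \<Rightarrow> ('e \<Rightarrow> 'v \<times> 'v) \<Rightarrow> ('e \<Rightarrow> real) \<Rightarrow> real" where
  "kirchhoff V E ends \<alpha> =
     (\<Prod>K\<in>components V E ends.
        \<Sum>T\<in>spanning_trees_comp E ends K. \<Prod>e\<in>{e\<in>E. fst (ends e) \<in> K} - T. \<alpha> e)"

definition betti1 :: "'v set \<Rightarrow> 'e set \<Rightarrow> ('e \<Rightarrow> 'v \<times> 'v) \<Rightarrow> nat" where
  "betti1 V E ends = card E + card (components V E ends) - card V"

definition graph_connected :: "'v set \<Rightarrow> 'e set \<Rightarrow> ('e \<Rightarrow> 'v \<times> 'v) \<Rightarrow> bool" where
  "graph_connected V E ends \<longleftrightarrow> V \<noteq> {} \<and> (\<forall>x\<in>V. \<forall>y\<in>V. (x, y) \<in> conn ends E)"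

definition contr_V :: "'v set \<Rightarrow> ('e \<Rightarrow> 'v \<times> 'v) \<Rightarrow> 'e set \<Rightarrow> 'v set set" where
  "contr_V V ends S = V // vrel V ends S"

definition contr_ends :: "'v set \<Rightarrow> ('e \<Rightarrow> 'v \<times> 'v) \<Rightarrow> 'e set \<Rightarrow> 'e \<Rightarrow> 'v set \<times> 'v set" where
  "contr_ends V ends S e =
     (vrel V ends S `` {fst (ends e)}, vrel V ends S `` {snd (ends e)})"

definition kirchhoff_contr :: "'v set \<Rightarrow> 'e set \<Rightarrow> ('e \<Rightarrow> 'v \<times> 'v) \<Rightarrow> 'e set \<Rightarrow> ('e \<Rightarrow> real) \<Rightarrow> real" where
  "kirchhoff_contr V E ends S \<alpha> = kirchhoff (contr_V V ends S) (E - S) (contr_ends V ends S) \<alpha>"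

text \<open>simple cycles: nonempty connected edge sets in which every vertex has degree 2
  (a self-loop contributes 2 to the degree)\<close>
definition cverts :: "('e \<Rightarrow> 'v \<times> 'v) \<Rightarrow> 'e set \<Rightarrow> 'v set" where
  "cverts ends C = fst ` ends ` C \<union> snd ` ends ` C"

definition degree :: "('e \<Rightarrow> 'v \<times> 'v) \<Rightarrow> 'e set \<Rightarrow> 'v \<Rightarrow> nat" where
  "degree ends C v = card {e\<in>C. fst (ends e) = v} + card {e\<in>C. snd (ends e) = v}"

definition is_simple_cycle :: "'e set \<Rightarrow> ('e \<Rightarrow> 'v \<times> 'v) \<Rightarrow> 'e set \<Rightarrow> bool" where
  "is_simple_cycle E ends C \<longleftrightarrow> C \<subseteq> E \<and> C \<noteq> {} \<and>
     (\<forall>x\<in>cverts ends C. \<forall>y\<in>cverts ends C. (x, y) \<in> conn ends C) \<and>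
     (\<forall>v\<in>cverts ends C. degree ends C v = 2)"

text \<open>a cyclic orientation of C: signs +1/-1 on C (0 off C) such that traversal is
  consistent, i.e. the signed incidence sums vanish at every vertex\<close>
definition is_cyc_orientation :: "('e \<Rightarrow> 'v \<times> 'v) \<Rightarrow> 'e set \<Rightarrow> ('e \<Rightarrow> int) \<Rightarrow> bool" where
  "is_cyc_orientation ends C sg \<longleftrightarrow>
     (\<forall>e. e \<notin> C \<longrightarrow> sg e = 0) \<and> (\<forall>e\<in>C. sg e = 1 \<or> sg e = -1) \<and>
     (\<forall>v. (\<Sum>e\<in>C. sg e * ((if snd (ends e) = v then 1 else 0) - (if fst (ends e) = v then 1 else 0))) = 0)"

definition orient :: "('e \<Rightarrow> 'v \<times> 'v) \<Rightarrow> 'e set \<Rightarrow> 'e \<Rightarrow> int" where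
  "orient ends C = (SOME sg. is_cyc_orientation ends C sg)"

definition cycpoly :: "'v set \<Rightarrow> 'e set \<Rightarrow> ('e \<Rightarrow> 'v \<times> 'v) \<Rightarrow> ('e \<Rightarrow> real) \<Rightarrow> 'e \<Rightarrow> 'e \<Rightarrow> real" where
  "cycpoly V E ends \<alpha> e f =
     (\<Sum>C\<in>{C. is_simple_cycle E ends C}.
        of_int (orient ends C e * orient ends C f) * kirchhoff_contr V E ends C \<alpha>)"

definition dodgson :: "'v set \<Rightarrow> 'e set \<Rightarrow> ('e \<Rightarrow> 'v \<times> 'v) \<Rightarrow> ('e \<Rightarrow> real) \<Rightarrow> 'e list \<Rightarrow> 'e list \<Rightarrow> real" where
  "dodgson V E ends \<alpha> us vs =
     kirchhoff V E ends \<alpha> powi (1 - int (length us)) *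
     (\<Sum>\<sigma>\<in>{\<sigma>. \<sigma> permutes {..<length us}}.
        of_int (sign \<sigma>) * (\<Prod>i<length us. cycpoly V E ends \<alpha> (us ! i) (vs ! \<sigma> i)))"

text \<open>Chord diagrams. Vertex set W; perfect matchings are partitions into 2-element sets.\<close>
definition perfect_matching :: "'w set \<Rightarrow> 'w set set \<Rightarrow> bool" where
  "perfect_matching W M \<longleftrightarrow> (\<forall>p\<in>M. p \<subseteq> W \<and> card p = 2) \<and> (\<forall>w\<in>W. \<exists>!p. p \<in> M \<and> w \<in> p)"

definition cm_degree :: "'w set set \<Rightarrow> 'w set set \<Rightarrow> 'w \<Rightarrow> nat" where
  "cm_degree P M v = card {p\<in>P. v \<in> p} + card {q\<in>M. v \<in> q}"

definition cm_rel :: "'w set \<Rightarrow> 'w set set \<Rightarrow> 'w set set \<Rightarrow> ('w \<times> 'w) set" where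
  "cm_rel W P M = {(x, y). \<exists>p\<in>P \<union> M. x \<in> p \<and> y \<in> p}\<^sup>* \<inter> (W \<times> W)"

definition c2 :: "'w set \<Rightarrow> 'w set set \<Rightarrow> 'w set set \<Rightarrow> nat" where
  "c2 W P M = card {K\<in>W // cm_rel W P M. \<forall>v\<in>K. cm_degree P M v = 2}"

definition chord_chi :: "'v set \<Rightarrow> 'e set \<Rightarrow> ('e \<Rightarrow> 'v \<times> 'v) \<Rightarrow> ('e \<Rightarrow> real) \<Rightarrow> ('w \<Rightarrow> 'e) \<Rightarrow> 'w set \<Rightarrow> real" where
  "chord_chi V E ends \<alpha> lab p =
     (let ab = (SOME ab. p = {fst ab, snd ab} \<and> fst ab \<noteq> snd ab)
      in cycpoly V E ends \<alpha> (lab (fst ab)) (lab (snd ab)))"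

definition splits :: "'w set \<Rightarrow> 'w set set \<Rightarrow> nat \<Rightarrow> 'w set set set" where
  "splits W M N = {{U, U'} | U U'. U \<inter> U' = {} \<and> U \<union> U' = W \<and> card U = N \<and> card U' = N \<and>
      (\<forall>p\<in>M. card (p \<inter> U) = 1 \<and> card (p \<inter> U') = 1)}"

text \<open>representative words of a pair S = {U, U'} (with U chosen from S) w.r.t. an
  enumeration of the colour-j edges\<close>
definition rep_u :: "('w \<Rightarrow> 'e) \<Rightarrow> ('w \<times> 'w) list \<Rightarrow> 'w set set \<Rightarrow> 'e list" where
  "rep_u lab enum S = (let U = (SOME U. U \<in> S) in
      map (\<lambda>(a, b). if a \<in> U then lab a else lab b) enum)"

definition rep_v :: "('w \<Rightarrow> 'e) \<Rightarrow> ('w \<times> 'w) list \<Rightarrow> 'w set set \<Rightarrow> 'e list" where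
  "rep_v lab enum S = (let U = (SOME U. U \<in> S) in
      map (\<lambda>(a, b). if a \<in> U then lab b else lab a) enum)"

end

theory Submission
  imports Defs
begin

definition adjE :: "'w set set \<Rightarrow> ('w \<times> 'w) set" where
  "adjE E = {(x,y). \<exists>p\<in>E. x \<in> p \<and> y \<in> p}"

lemma cm_rel_adj: "cm_rel W P M = (adjE (P \<union> M))\<^sup>* \<inter> W \<times> W"
  by (simp add: cm_rel_def adjE_def)

lemma sym_adjE: "sym (adjE E)"
  by (auto simp: sym_def adjE_def)

lemma adj_equiv:
  assumes "\<forall>p\<in>E. p \<subseteq> W"
  shows "equiv W ((adjE E)\<^sup>* \<inter> W \<times> W)"
proof (rule equivI)
  show "refl_on W ((adjE E)\<^sup>* \<inter> W \<times> W)" by (auto simp: refl_on_def)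
  have s: "sym ((adjE E)\<^sup>*)" using sym_adjE sym_rtrancl by blast
  show "sym ((adjE E)\<^sup>* \<inter> W \<times> W)" using s by (auto simp: sym_def)
  show "trans ((adjE E)\<^sup>* \<inter> W \<times> W)" by (auto simp: trans_def)
qed auto

lemma pm_unique: "perfect_matching W P \<Longrightarrow> p \<in> P \<Longrightarrow> q \<in> P \<Longrightarrow> w \<in> p \<Longrightarrow> w \<in> q \<Longrightarrow> p = q"
  unfolding perfect_matching_def by (metis subsetD)

lemma pm_card1: assumes "perfect_matching W P" "v \<in> W" shows "card {p\<in>P. v \<in> p} = 1"
proof -
  obtain p where p: "p \<in> P" "v \<in> p" using assms unfolding perfect_matching_def by blast
  have "{p\<in>P. v \<in> p} = {p}" using p pm_unique[OF assms(1)] by blast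
  thus ?thesis by simp
qed

lemma c2_eq:
  assumes "perfect_matching W P" "perfect_matching W M"
  shows "c2 W P M = card (W // ((adjE (P \<union> M))\<^sup>* \<inter> W \<times> W))"
proof -
  have eq: "equiv W (cm_rel W P M)" unfolding cm_rel_adj
    by (rule adj_equiv) (use assms in \<open>auto simp: perfect_matching_def\<close>)
  have "{K\<in>W // cm_rel W P M. \<forall>v\<in>K. cm_degree P M v = 2} = W // cm_rel W P M"
  proof -
    { fix K v assume K: "K \<in> W // cm_rel W P M" and v: "v \<in> K"
      have "v \<in> W" using K v eq in_quotient_imp_subset by blast
      hence "cm_degree P M v = 2" using pm_card1[OF assms(1)] pm_card1[OF assms(2)]
        by (simp add: cm_degree_def) }
    thus ?thesis by blast
  qed
  thus ?thesis by (simp add: c2_def cm_rel_adj)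
qed

lemma quot_card_restrict:
  assumes eq: "equiv W R" and sub: "W' \<subseteq> W" and R': "R' = R \<inter> W' \<times> W'"
    and cov: "\<forall>w\<in>W. \<exists>w'\<in>W'. (w, w') \<in> R" and fin: "finite W"
  shows "card (W // R) = card (W' // R')"
proof -
  have eq': "equiv W' R'" using eq R' sub unfolding equiv_def refl_on_def sym_def trans_def by blast
  have cls: "R' `` {w} = R `` {w} \<inter> W'" if "w \<in> W'" for w using R' that by auto
  have "bij_betw (\<lambda>K. K \<inter> W') (W // R) (W' // R')"
  proof (rule bij_betw_imageI)
    show "inj_on (\<lambda>K. K \<inter> W') (W // R)"
    proof (rule inj_onI)
      fix K1 K2 assume K1: "K1 \<in> W // R" and K2: "K2 \<in> W // R" and e: "K1 \<inter> W' = K2 \<inter> W'"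
      obtain w1 where w1: "w1 \<in> W" "K1 = R``{w1}" using K1 by (auto elim: quotientE)
      obtain w' where w': "w' \<in> W'" "(w1, w') \<in> R" using cov w1 by blast
      have "w' \<in> K1" using w1 w' by auto
      hence "w' \<in> K2" using e w' by auto
      have "K1 = R``{w'}" using w1 w' eq by (simp add: equiv_class_eq)
      moreover obtain w2 where w2: "w2 \<in> W" "K2 = R``{w2}" using K2 by (auto elim: quotientE)
      moreover have "(w2, w') \<in> R" using \<open>w' \<in> K2\<close> w2 by auto
      ultimately show "K1 = K2" using eq by (simp add: equiv_class_eq)
    qed
    show "(\<lambda>K. K \<inter> W') ` (W // R) = W' // R'"
    proof
      show "(\<lambda>K. K \<inter> W') ` (W // R) \<subseteq> W' // R'"
      proof
        fix K' assume "K' \<in> (\<lambda>K. K \<inter> W') ` (W // R)"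
        then obtain w where w: "w \<in> W" "K' = R``{w} \<inter> W'" by (auto elim: quotientE)
        obtain w' where w': "w' \<in> W'" "(w, w') \<in> R" using cov w by blast
        have "R``{w} = R``{w'}" using w' eq by (simp add: equiv_class_eq)
        hence "K' = R'``{w'}" using w w' cls by auto
        thus "K' \<in> W' // R'" using w' by (auto intro: quotientI)
      qed
      show "W' // R' \<subseteq> (\<lambda>K. K \<inter> W') ` (W // R)"
      proof
        fix K' assume "K' \<in> W' // R'"
        then obtain w' where w': "w' \<in> W'" "K' = R'``{w'}" by (auto elim: quotientE)
        hence "K' = R``{w'} \<inter> W'" using cls by auto
        moreover have "R``{w'} \<in> W // R" using w' sub by (auto intro: quotientI)
        ultimately show "K' \<in> (\<lambda>K. K \<inter> W') ` (W // R)" by blast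
      qed
    qed
  qed
  thus ?thesis by (rule bij_betw_same_card)
qed

lemma adjE_in: "p \<in> E \<Longrightarrow> x \<in> p \<Longrightarrow> y \<in> p \<Longrightarrow> (x, y) \<in> adjE E"
  by (auto simp: adjE_def)

lemma adjE_closed:
  assumes "\<forall>p\<in>E. p \<subseteq> A" "(u, v) \<in> (adjE E)\<^sup>*" "u \<in> A"
  shows "v \<in> A"
  using assms(2,3) by (induction rule: rtrancl_induct) (use assms(1) in \<open>auto simp: adjE_def\<close>)

lemma case1_conn:
  assumes E'W: "\<forall>p\<in>E'. p \<subseteq> W'" and ab: "a \<notin> W'" "b \<notin> W'"
    and E: "E = insert {a,b} E'"
    and uv: "(u, v) \<in> (adjE E)\<^sup>*"
  shows "(u \<in> W' \<longrightarrow> (u, v) \<in> (adjE E')\<^sup>*) \<and> (u \<in> {a,b} \<longrightarrow> v \<in> {a,b})"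
  using uv
proof (induction rule: rtrancl_induct)
  case base then show ?case by auto
next
  case (step v z)
  then obtain p where p: "p \<in> E" "v \<in> p" "z \<in> p" by (auto simp: adjE_def)
  show ?case
  proof (cases "p = {a,b}")
    case True
    then show ?thesis using step p ab adjE_closed[OF E'W] by blast
  next
    case False
    hence pE: "p \<in> E'" using p E by auto
    hence "v \<in> W'" "z \<in> W'" using E'W p by auto
    moreover have "(v, z) \<in> adjE E'" using pE p by (auto simp: adjE_def)
    ultimately show ?thesis using step ab by auto
  qed
qed

lemma case1_card:
  assumes E'W: "\<forall>p\<in>E'. p \<subseteq> W'" and ab: "a \<notin> W'" "b \<notin> W'" "a \<noteq> b"
    and E: "E = insert {a,b} E'" and fin: "finite W'"
  shows "card (insert a (insert b W') // ((adjE E)\<^sup>* \<inter> insert a (insert b W') \<times> insert a (insert b W')))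
       = Suc (card (W' // ((adjE E')\<^sup>* \<inter> W' \<times> W')))"
proof -
  define W where "W = insert a (insert b W')"
  define R where "R = (adjE E)\<^sup>* \<inter> W \<times> W"
  define R' where "R' = (adjE E')\<^sup>* \<inter> W' \<times> W'"
  have EW: "\<forall>p\<in>E. p \<subseteq> W" using E'W E W_def by auto
  have eq: "equiv W R" unfolding R_def by (rule adj_equiv[OF EW])
  have sub: "(adjE E')\<^sup>* \<subseteq> (adjE E)\<^sup>*"
    by (rule rtrancl_mono) (auto simp: adjE_def E)
  have clsW': "R``{w} = R'``{w}" if "w \<in> W'" for w
  proof -
    have "R``{w} \<subseteq> R'``{w}"
    proof
      fix v assume "v \<in> R``{w}"
      hence "(w, v) \<in> (adjE E)\<^sup>*" by (auto simp: R_def)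
      hence "(w, v) \<in> (adjE E')\<^sup>*" using case1_conn[OF E'W ab(1,2) E] that by blast
      moreover have "v \<in> W'" using adjE_closed[OF E'W _ that] \<open>(w, v) \<in> (adjE E')\<^sup>*\<close> by blast
      ultimately show "v \<in> R'``{w}" using that by (auto simp: R'_def)
    qed
    moreover have "R'``{w} \<subseteq> R``{w}" using sub by (auto simp: R_def R'_def W_def)
    ultimately show ?thesis by blast
  qed
  have clsa: "R``{a} = {a,b}"
  proof
    show "R``{a} \<subseteq> {a,b}" using case1_conn[OF E'W ab(1,2) E] by (auto simp: R_def)
    have "(a, b) \<in> adjE E" by (auto simp: adjE_def E)
    thus "{a,b} \<subseteq> R``{a}" by (auto simp: R_def W_def)
  qed
  have clsb: "R``{b} = {a,b}"
  proof -
    have "(a, b) \<in> adjE E" by (auto simp: adjE_def E)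
    hence "(a, b) \<in> R" by (auto simp: R_def W_def)
    thus ?thesis using clsa eq by (metis equiv_class_eq)
  qed
  have Q: "W // R = insert {a,b} (W' // R')"
    unfolding quotient_def W_def using clsa clsb clsW' by auto
  have "{a,b} \<notin> W' // R'"
  proof
    assume "{a,b} \<in> W' // R'"
    hence "{a,b} \<subseteq> W'" by (auto simp: R'_def elim!: quotientE)
    thus False using ab by auto
  qed
  moreover have "finite (W' // R')" using fin by (rule finite_quotient) (auto simp: R'_def)
  ultimately show ?thesis using Q by (simp add: W_def R_def R'_def)
qed

lemma case2_conn:
  assumes E'W: "\<forall>p\<in>E'. p \<subseteq> W'" and ab: "a \<notin> W'" "b \<notin> W'"
    and xy: "{x,y} \<in> E'"
    and EE': "E \<subseteq> E' \<union> {{a,b},{a,x},{b,y}}"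
    and uv: "(u, v) \<in> (adjE E)\<^sup>*" and u: "u \<in> W'"
  shows "(v \<in> W' \<longrightarrow> (u, v) \<in> (adjE E')\<^sup>*) \<and> (v \<in> {a,b} \<longrightarrow> (u, x) \<in> (adjE E')\<^sup>*)"
  using uv
proof (induction rule: rtrancl_induct)
  case base then show ?case using u ab by auto
next
  case (step v z)
  then obtain p where p: "p \<in> E" "v \<in> p" "z \<in> p" by (auto simp: adjE_def)
  have xy1: "(x, y) \<in> adjE E'" "(y, x) \<in> adjE E'" using xy by (auto simp: adjE_def)
  have xW: "x \<in> W'" "y \<in> W'" using xy E'W by auto
  have "p \<in> E' \<or> p = {a,b} \<or> p = {a,x} \<or> p = {b,y}" using p EE' by auto
  then show ?case
  proof (elim disjE)
    assume pE: "p \<in> E'"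
    hence "v \<in> W'" "z \<in> W'" using E'W p by auto
    moreover have "(v, z) \<in> adjE E'" using pE p by (auto simp: adjE_def)
    ultimately show ?thesis using step ab by auto
  next
    assume "p = {a,b}" thus ?thesis using step p ab by auto
  next
    assume "p = {a,x}" thus ?thesis using step p ab xW by auto
  next
    assume pby: "p = {b,y}"
    show ?thesis
    proof (cases "v = b")
      case True
      hence "(u, x) \<in> (adjE E')\<^sup>*" using step by auto
      hence "(u, y) \<in> (adjE E')\<^sup>*" using xy1 by (meson rtrancl.rtrancl_into_rtrancl)
      thus ?thesis using pby p True ab xW \<open>(u, x) \<in> _\<close> by auto
    next
      case False
      hence "v = y" using pby p by auto
      hence "(u, y) \<in> (adjE E')\<^sup>*" using step xW by auto
      hence "(u, x) \<in> (adjE E')\<^sup>*" using xy1 by (meson rtrancl.rtrancl_into_rtrancl)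
      thus ?thesis using pby p \<open>v = y\<close> ab xW \<open>(u, y) \<in> _\<close> by auto
    qed
  qed
qed

lemma case2_card:
  assumes E'W: "\<forall>p\<in>E'. p \<subseteq> W'" and ab: "a \<notin> W'" "b \<notin> W'"
    and xy: "{x,y} \<in> E'"
    and EE': "E \<subseteq> E' \<union> {{a,b},{a,x},{b,y}}"
    and three: "{a,b} \<in> E" "{a,x} \<in> E" "{b,y} \<in> E"
    and E'E: "\<forall>p\<in>E'. p \<in> E \<or> p = {x,y}"
    and fin: "finite W'"
  shows "card (insert a (insert b W') // ((adjE E)\<^sup>* \<inter> insert a (insert b W') \<times> insert a (insert b W')))
       = card (W' // ((adjE E')\<^sup>* \<inter> W' \<times> W'))"
proof -
  define W where "W = insert a (insert b W')"
  have xW: "x \<in> W'" "y \<in> W'" using xy E'W by auto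
  have EW: "\<forall>p\<in>E. p \<subseteq> W" using E'W EE' W_def xW by auto
  have eq: "equiv W ((adjE E)\<^sup>* \<inter> W \<times> W)" by (rule adj_equiv[OF EW])
  have ax: "(a, x) \<in> adjE E" "(b, y) \<in> adjE E" "(a, b) \<in> adjE E" "(b, a) \<in> adjE E"
    "(x, a) \<in> adjE E" "(y, b) \<in> adjE E"
    using three by (auto simp: adjE_def)
  have sub: "adjE E' \<subseteq> (adjE E)\<^sup>*"
  proof
    fix q assume "q \<in> adjE E'"
    then obtain v z p where q: "q = (v, z)" "p \<in> E'" "v \<in> p" "z \<in> p" by (auto simp: adjE_def)
    show "q \<in> (adjE E)\<^sup>*"
    proof (cases "p \<in> E")
      case True thus ?thesis using q by (auto simp: adjE_def)
    next
      case False
      hence "p = {x,y}" using E'E q by auto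
      have xy: "(x, y) \<in> (adjE E)\<^sup>*" using ax
        by (meson rtrancl.rtrancl_into_rtrancl r_into_rtrancl)
      have yx: "(y, x) \<in> (adjE E)\<^sup>*" using ax
        by (meson rtrancl.rtrancl_into_rtrancl r_into_rtrancl)
      show ?thesis using q \<open>p = {x,y}\<close> xy yx by auto
    qed
  qed
  have sub2: "(adjE E')\<^sup>* \<subseteq> (adjE E)\<^sup>*" using sub by (rule rtrancl_subset_rtrancl)
  have "card (W // ((adjE E)\<^sup>* \<inter> W \<times> W)) = card (W' // ((adjE E')\<^sup>* \<inter> W' \<times> W'))"
  proof (rule quot_card_restrict[OF eq])
    show "W' \<subseteq> W" by (auto simp: W_def)
    show "(adjE E')\<^sup>* \<inter> W' \<times> W' = (adjE E)\<^sup>* \<inter> W \<times> W \<inter> W' \<times> W'"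
      using sub2 case2_conn[OF E'W ab xy EE'] by (auto simp: W_def)
    show "\<forall>w\<in>W. \<exists>w'\<in>W'. (w, w') \<in> (adjE E)\<^sup>* \<inter> W \<times> W"
      using ax xW by (auto simp: W_def)
    show "finite W" using fin by (simp add: W_def)
  qed
  thus ?thesis by (simp add: W_def)
qed

definition uu :: "('w \<times> 'w) list \<Rightarrow> nat set \<Rightarrow> nat \<Rightarrow> 'w" where
  "uu en T i = (if i \<in> T then snd (en ! i) else fst (en ! i))"
definition vv :: "('w \<times> 'w) list \<Rightarrow> nat set \<Rightarrow> nat \<Rightarrow> 'w" where
  "vv en T i = (if i \<in> T then fst (en ! i) else snd (en ! i))"
definition pts :: "('w \<times> 'w) list \<Rightarrow> 'w set" where
  "pts en = fst ` set en \<union> snd ` set en"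
definition Mof :: "('w \<times> 'w) list \<Rightarrow> 'w set set" where
  "Mof en = (\<lambda>(a, b). {a, b}) ` set en"
definition good :: "('w \<times> 'w) list \<Rightarrow> bool" where
  "good en \<longleftrightarrow> distinct (map fst en @ map snd en)"
definition fib :: "('w \<times> 'w) list \<Rightarrow> 'w set set \<Rightarrow> (nat set \<times> (nat \<Rightarrow> nat)) set" where
  "fib en P = {(T, \<sigma>). T \<subseteq> {..<length en} \<and> \<sigma> permutes {..<length en} \<and>
      (\<forall>i<length en. {uu en T i, vv en T (\<sigma> i)} \<in> P)}"
definition wt :: "nat \<Rightarrow> nat \<Rightarrow> real" where
  "wt n c = 2 * (-1) powi (int n - 1) * (-2) powi (int c - 1)"

lemma good_fst: assumes "good en" "i < length en" "j < length en" "fst (en!i) = fst (en!j)" shows "i = j"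
proof -
  have d: "distinct (map fst en)" using assms(1) unfolding good_def by (simp only: distinct_append)
  have l: "i < length (map fst en)" "j < length (map fst en)" using assms(2,3) by simp_all
  have e: "map fst en ! i = map fst en ! j" using assms(2-4) by (simp only: nth_map)
  show ?thesis using nth_eq_iff_index_eq[OF d l] e by blast
qed
lemma good_snd: assumes "good en" "i < length en" "j < length en" "snd (en!i) = snd (en!j)" shows "i = j"
proof -
  have d: "distinct (map snd en)" using assms(1) unfolding good_def by (simp only: distinct_append)
  have l: "i < length (map snd en)" "j < length (map snd en)" using assms(2,3) by simp_all
  have e: "map snd en ! i = map snd en ! j" using assms(2-4) by (simp only: nth_map)
  show ?thesis using nth_eq_iff_index_eq[OF d l] e by blast
qed
lemma good_fs: assumes "good en" "i < length en" "j < length en" shows "fst (en!i) \<noteq> snd (en!j)"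
proof
  assume eq: "fst (en!i) = snd (en!j)"
  have d: "set (map fst en) \<inter> set (map snd en) = {}" using assms(1) unfolding good_def distinct_append by (elim conjE)
  have "en ! i \<in> set en" using assms(2) by (rule nth_mem)
  hence 1: "fst (en!i) \<in> set (map fst en)" unfolding set_map by (rule imageI)
  have "en ! j \<in> set en" using assms(3) by (rule nth_mem)
  hence 2: "snd (en!j) \<in> set (map snd en)" unfolding set_map by (rule imageI)
  have "fst (en!i) \<in> set (map fst en) \<inter> set (map snd en)" using 1 2 eq by (simp only: IntI)
  thus False using d by (simp only: empty_iff)
qed

lemma uu_inj: assumes "good en" "i < length en" "j < length en" "uu en T i = uu en T j" shows "i = j"
proof (cases "i \<in> T"; cases "j \<in> T")
  assume "i \<in> T" "j \<in> T" thus ?thesis using assms good_snd[OF assms(1-3)] by (simp add: uu_def)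
next
  assume "i \<in> T" "j \<notin> T" thus ?thesis using assms good_fs[OF assms(1,3,2)] by (simp add: uu_def)
next
  assume "i \<notin> T" "j \<in> T" thus ?thesis using assms good_fs[OF assms(1,2,3)] by (simp add: uu_def)
next
  assume "i \<notin> T" "j \<notin> T" thus ?thesis using assms good_fst[OF assms(1-3)] by (simp add: uu_def)
qed
lemma vv_inj: assumes "good en" "i < length en" "j < length en" "vv en T i = vv en T j" shows "i = j"
proof (cases "i \<in> T"; cases "j \<in> T")
  assume "i \<in> T" "j \<in> T" thus ?thesis using assms good_fst[OF assms(1-3)] by (simp add: vv_def)
next
  assume "i \<in> T" "j \<notin> T" thus ?thesis using assms good_fs[OF assms(1,2,3)] by (simp add: vv_def)
next
  assume "i \<notin> T" "j \<in> T" thus ?thesis using assms good_fs[OF assms(1,3,2)] by (simp add: vv_def)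
next
  assume "i \<notin> T" "j \<notin> T" thus ?thesis using assms good_snd[OF assms(1-3)] by (simp add: vv_def)
qed
lemma uv_ne: assumes "good en" "i < length en" "j < length en" shows "uu en T i \<noteq> vv en T j"
proof (cases "i \<in> T"; cases "j \<in> T")
  assume "i \<in> T" "j \<in> T" thus ?thesis using good_fs[OF assms(1,3,2)] by (simp add: uu_def vv_def)
next
  assume "i \<in> T" "j \<notin> T" thus ?thesis using good_snd[OF assms(1-3)] by (auto simp: uu_def vv_def)
next
  assume "i \<notin> T" "j \<in> T" thus ?thesis using good_fst[OF assms(1-3)] by (auto simp: uu_def vv_def)
next
  assume "i \<notin> T" "j \<notin> T" thus ?thesis using good_fs[OF assms(1,2,3)] by (simp add: uu_def vv_def)
qed
lemma uu_pts: "i < length en \<Longrightarrow> uu en T i \<in> pts en"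
  unfolding uu_def pts_def by auto
lemma vv_pts: "i < length en \<Longrightarrow> vv en T i \<in> pts en"
  unfolding vv_def pts_def by auto

lemma pts_cover: assumes "w \<in> pts en" shows "\<exists>i<length en. w = uu en T i \<or> w = vv en T i"
proof -
  obtain i where i: "i < length en" "w = fst (en!i) \<or> w = snd (en!i)"
    using assms unfolding pts_def by (auto simp: in_set_conv_nth)
  thus ?thesis unfolding uu_def vv_def by (cases "i \<in> T") auto
qed

lemma chord_cover:
  assumes "\<sigma> permutes {..<length en}" "w \<in> pts en"
  shows "\<exists>i<length en. w \<in> {uu en T i, vv en T (\<sigma> i)}"
proof -
  obtain i where i: "i < length en" "w = uu en T i \<or> w = vv en T i" using pts_cover[OF assms(2)] by blast
  show ?thesis
  proof (cases "w = uu en T i")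
    case True thus ?thesis using i by auto
  next
    case False
    hence w: "w = vv en T i" using i by auto
    have "inv \<sigma> i < length en" using permutes_in_image[OF permutes_inv[OF assms(1)]] i(1) by auto
    moreover have "\<sigma> (inv \<sigma> i) = i" using assms(1) by (rule permutes_inverses)
    ultimately show ?thesis using w by (intro exI[of _ "inv \<sigma> i"]) auto
  qed
qed

lemma chord_inj:
  assumes "good en" "i < length en" "j < length en" "{uu en T i, vv en T (\<sigma> i)} = {uu en T j, vv en T (\<sigma> j)}"
    "\<sigma> permutes {..<length en}"
  shows "i = j"
proof -
  have "\<sigma> j < length en" using permutes_in_image[OF assms(5)] assms(3) by auto
  hence "uu en T i \<noteq> vv en T (\<sigma> j)" using uv_ne[OF assms(1,2)] by blast
  hence "uu en T i = uu en T j" using assms(4) unfolding doubleton_eq_iff by blast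
  thus ?thesis using uu_inj[OF assms(1-3)] by blast
qed

lemma pts_alt: "pts en = set (map fst en) \<union> set (map snd en)"
  unfolding pts_def by simp

lemma good_snoc:
  assumes "good (en @ [(a, b)])"
  shows "good en" "a \<noteq> b" "a \<notin> pts en" "b \<notin> pts en"
proof -
  have d: "distinct ((map fst en @ [a]) @ (map snd en @ [b]))" using assms unfolding good_def by simp
  have d1: "distinct (map fst en)" "a \<notin> set (map fst en)" "distinct (map snd en)" "b \<notin> set (map snd en)"
    and d2: "(set (map fst en) \<union> {a}) \<inter> (set (map snd en) \<union> {b}) = {}"
    using d by (simp_all only: distinct_append distinct1_rotate) (simp_all add: Un_commute)
  show "good en" unfolding good_def using d1 d2 by (simp only: distinct_append) blast
  show "a \<noteq> b" using d2 by blast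
  show "a \<notin> pts en" using d1 d2 unfolding pts_alt by blast
  show "b \<notin> pts en" using d1 d2 unfolding pts_alt by blast
qed

lemma pts_snoc: "pts (en @ [(a, b)]) = insert a (insert b (pts en))"
  unfolding pts_def by auto
lemma Mof_snoc: "Mof (en @ [(a, b)]) = insert {a, b} (Mof en)"
  unfolding Mof_def by auto
lemma uu_snoc: "i < length en \<Longrightarrow> uu (en @ [ab]) T i = uu en T i"
  unfolding uu_def by (simp add: nth_append)
lemma vv_snoc: "i < length en \<Longrightarrow> vv (en @ [ab]) T i = vv en T i"
  unfolding vv_def by (simp add: nth_append)
lemma uu_last: "uu (en @ [(a,b)]) T (length en) = (if length en \<in> T then b else a)"
  unfolding uu_def by simp
lemma vv_last: "vv (en @ [(a,b)]) T (length en) = (if length en \<in> T then a else b)"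
  unfolding vv_def by simp
lemma uu_minus: "i \<noteq> n \<Longrightarrow> uu en (T - {n}) i = uu en T i"
  unfolding uu_def by simp
lemma vv_minus: "i \<noteq> n \<Longrightarrow> vv en (T - {n}) i = vv en T i"
  unfolding vv_def by simp
lemma uu_ins: "i \<noteq> n \<Longrightarrow> uu en (insert n T) i = uu en T i"
  unfolding uu_def by simp
lemma vv_ins: "i \<noteq> n \<Longrightarrow> vv en (insert n T) i = vv en T i"
  unfolding vv_def by simp

lemma Mof_pm: assumes "good en" shows "perfect_matching (pts en) (Mof en)"
proof -
  have A: "p \<subseteq> pts en \<and> card p = 2" if "p \<in> Mof en" for p
  proof -
    from that obtain a b where ab: "(a,b) \<in> set en" "p = {a,b}" by (auto simp: Mof_def)
    then obtain i where i: "i < length en" "en ! i = (a, b)" by (auto simp: in_set_conv_nth)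
    have "a \<noteq> b" using good_fs[OF assms i(1) i(1)] i by auto
    thus "p \<subseteq> pts en \<and> card p = 2" using ab by (auto simp: pts_def intro: rev_image_eqI)
  qed
  have B: "\<exists>!p. p \<in> Mof en \<and> w \<in> p" if w: "w \<in> pts en" for w
  proof -
    obtain i where i: "i < length en" "w = fst (en!i) \<or> w = snd (en!i)"
      using w unfolding pts_def by (auto simp: in_set_conv_nth)
    have "{fst (en!i), snd (en!i)} \<in> Mof en" using i(1) unfolding Mof_def
      by (auto simp: in_set_conv_nth intro!: image_eqI[where x="en!i"])
    moreover have "q = {fst (en!i), snd (en!i)}" if qq: "q \<in> Mof en" "w \<in> q" for q
    proof -
      obtain ab where ab: "ab \<in> set en" "q = (\<lambda>(a, b). {a, b}) ab"
        using qq(1) unfolding Mof_def by blast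
      obtain j where j0: "j < length en" "en ! j = ab" using ab(1) by (auto simp: in_set_conv_nth)
      have j: "j < length en" "q = {fst (en!j), snd (en!j)}" using j0 ab by (cases ab; simp)+
      have "i = j" using i j qq(2) good_fst[OF assms i(1) j(1)] good_snd[OF assms i(1) j(1)] good_fs[OF assms i(1) j(1)] good_fs[OF assms j(1) i(1)] by auto
      thus ?thesis using j by simp
    qed
    ultimately show ?thesis using i by blast
  qed
  show ?thesis unfolding perfect_matching_def using A B by blast
qed

lemma wt_suc_suc: "wt (Suc n) (Suc c) = 2 * wt n c"
proof -
  have a: "(-1::real) powi (int (Suc n) - 1) = - ((-1) powi (int n - 1))"
    by (simp add: power_int_diff)
  have b: "(-2::real) powi (int (Suc c) - 1) = -2 * ((-2) powi (int c - 1))"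
    by (simp add: power_int_diff)
  show ?thesis unfolding wt_def a b by simp
qed
lemma wt_suc: "wt (Suc n) c = - wt n c"
proof -
  have a: "(-1::real) powi (int (Suc n) - 1) = - ((-1) powi (int n - 1))"
    by (simp add: power_int_diff)
  show ?thesis unfolding wt_def a by simp
qed
lemma wt_nz: "wt n c \<noteq> 0"
  unfolding wt_def by simp
lemma "wt 0 0 = 1" unfolding wt_def by simp

lemma pm_sub: "perfect_matching W P \<Longrightarrow> p \<in> P \<Longrightarrow> p \<subseteq> W"
  unfolding perfect_matching_def by blast
lemma pm_card: "perfect_matching W P \<Longrightarrow> p \<in> P \<Longrightarrow> card p = 2"
  unfolding perfect_matching_def by blast
lemma pm_ex: "perfect_matching W P \<Longrightarrow> w \<in> W \<Longrightarrow> \<exists>p\<in>P. w \<in> p"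
  unfolding perfect_matching_def by blast
lemma pmI: "(\<And>p. p \<in> P \<Longrightarrow> p \<subseteq> W) \<Longrightarrow> (\<And>p. p \<in> P \<Longrightarrow> card p = 2) \<Longrightarrow>
   (\<And>w. w \<in> W \<Longrightarrow> \<exists>p\<in>P. w \<in> p) \<Longrightarrow> (\<And>p q w. p \<in> P \<Longrightarrow> q \<in> P \<Longrightarrow> w \<in> p \<Longrightarrow> w \<in> q \<Longrightarrow> p = q)
   \<Longrightarrow> perfect_matching W P"
  unfolding perfect_matching_def by blast

lemma fib_mem: "(T, \<sigma>) \<in> fib en P \<longleftrightarrow> T \<subseteq> {..<length en} \<and> \<sigma> permutes {..<length en} \<and>
      (\<forall>i<length en. {uu en T i, vv en T (\<sigma> i)} \<in> P)"
  by (simp add: fib_def)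

lemma perm_lt: "\<sigma> permutes {..<m} \<Longrightarrow> i < m \<Longrightarrow> \<sigma> i < m"
  using permutes_in_image by fastforce

lemma case1_fib:
  fixes en :: "('w \<times> 'w) list"
  assumes good: "good (en @ [(a,b)])" and pm: "perfect_matching (pts (en @ [(a,b)])) P"
    and ab: "{a,b} \<in> P"
  shows "fib (en @ [(a,b)]) P =
    (\<lambda>((T,\<sigma>),\<beta>). (if \<beta> then insert (length en) T else T, \<sigma>)) ` (fib en (P - {{a,b}}) \<times> UNIV)"
proof -
  define n where "n = length en"
  note g = good_snoc[OF good]
  have len: "length (en @ [(a,b)]) = Suc n" by (simp add: n_def)
  have lt: "{..<Suc n} = insert n {..<n}" by auto
  show ?thesis
  proof (intro equalityI subsetI)
    fix z assume z: "z \<in> fib (en @ [(a,b)]) P"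
    obtain T \<sigma> where z1: "z = (T, \<sigma>)" by (cases z)
    have T: "T \<subseteq> {..<Suc n}" and s: "\<sigma> permutes {..<Suc n}"
      and ch: "\<And>i. i < Suc n \<Longrightarrow> {uu (en @ [(a,b)]) T i, vv (en @ [(a,b)]) T (\<sigma> i)} \<in> P"
      using z z1 len by (auto simp: fib_mem)
    have sn: "\<sigma> n < Suc n" using perm_lt[OF s] by simp
    have "\<sigma> n = n"
    proof (rule ccontr)
      assume "\<sigma> n \<noteq> n"
      hence sn': "\<sigma> n < n" using sn by simp
      have c: "{uu (en @ [(a,b)]) T n, vv (en @ [(a,b)]) T (\<sigma> n)} \<in> P" using ch by simp
      have u: "uu (en @ [(a,b)]) T n \<in> {a,b}" using uu_last[of en a b T] by (simp add: n_def)
      have v: "vv (en @ [(a,b)]) T (\<sigma> n) \<in> pts en"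
        using vv_snoc[OF sn'[unfolded n_def]] vv_pts[OF sn'[unfolded n_def]] by (simp add: n_def)
      have "{uu (en @ [(a,b)]) T n, vv (en @ [(a,b)]) T (\<sigma> n)} = {a,b}"
        using pm_unique[OF pm c ab] u by blast
      hence "vv (en @ [(a,b)]) T (\<sigma> n) \<in> {a,b}" by (metis insertCI)
      thus False using v g(3,4) by (metis empty_iff insert_iff)
    qed
    hence s': "\<sigma> permutes {..<n}" using s by (intro permutes_superset[OF s]) auto
    define T' where "T' = T - {n}"
    have T': "T' \<subseteq> {..<n}" using T by (auto simp: T'_def)
    have "(T', \<sigma>) \<in> fib en (P - {{a,b}})"
      unfolding fib_mem n_def[symmetric]
    proof (intro conjI allI impI T' s')
      fix i assume i: "i < n"
      have si: "\<sigma> i < n" using perm_lt[OF s' i] .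
      have e1: "uu en T' i = uu (en @ [(a,b)]) T i" using i uu_snoc[of i en] uu_minus[of i n]
        by (simp add: T'_def n_def)
      have e2: "vv en T' (\<sigma> i) = vv (en @ [(a,b)]) T (\<sigma> i)" using si vv_snoc[of "\<sigma> i" en] vv_minus[of "\<sigma> i" n]
        by (simp add: T'_def n_def)
      have "uu en T' i \<in> pts en" using uu_pts i by (simp add: n_def)
      hence "uu en T' i \<noteq> a" "uu en T' i \<noteq> b" using g by auto
      hence "{uu en T' i, vv en T' (\<sigma> i)} \<noteq> {a,b}" by auto
      thus "{uu en T' i, vv en T' (\<sigma> i)} \<in> P - {{a,b}}" using ch[of i] i e1 e2 by simp
    qed
    moreover have "z = (if n \<in> T then insert n T' else T', \<sigma>)"
      using z1 by (auto simp: T'_def)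
    ultimately show "z \<in> (\<lambda>((T,\<sigma>),\<beta>). (if \<beta> then insert (length en) T else T, \<sigma>)) ` (fib en (P - {{a,b}}) \<times> UNIV)"
      by (intro image_eqI[where x="((T', \<sigma>), n \<in> T)"]) (auto simp: n_def)
  next
    fix z assume "z \<in> (\<lambda>((T,\<sigma>),\<beta>). (if \<beta> then insert (length en) T else T, \<sigma>)) ` (fib en (P - {{a,b}}) \<times> UNIV)"
    then obtain T' \<sigma> \<beta> where z: "z = (if \<beta> then insert (length en) T' else T', \<sigma>)" and m: "(T', \<sigma>) \<in> fib en (P - {{a,b}})"
      by auto
    have T': "T' \<subseteq> {..<n}" and s': "\<sigma> permutes {..<n}"
      and ch: "\<And>i. i < n \<Longrightarrow> {uu en T' i, vv en T' (\<sigma> i)} \<in> P - {{a,b}}"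
      using m by (auto simp: fib_mem n_def)
    define T where "T = (if \<beta> then insert n T' else T')"
    have zT: "z = (T, \<sigma>)" using z by (simp add: T_def n_def)
    have s: "\<sigma> permutes {..<Suc n}" using s' by (rule permutes_subset) auto
    have sn: "\<sigma> n = n" using s' by (simp add: permutes_not_in)
    have "(T, \<sigma>) \<in> fib (en @ [(a,b)]) P"
      unfolding fib_mem len
    proof (intro conjI allI impI s)
      show "T \<subseteq> {..<Suc n}" using T' by (auto simp: T_def)
      fix i assume i: "i < Suc n"
      show "{uu (en @ [(a,b)]) T i, vv (en @ [(a,b)]) T (\<sigma> i)} \<in> P"
      proof (cases "i = n")
        case True
        have "{uu (en @ [(a,b)]) T i, vv (en @ [(a,b)]) T (\<sigma> i)} = {a,b}"
          using True sn uu_last[of en a b T] vv_last[of en a b T] by (auto simp: n_def)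
        thus ?thesis using ab by simp
      next
        case False
        hence i': "i < n" using i by simp
        have si: "\<sigma> i < n" using perm_lt[OF s' i'] .
        have "uu (en @ [(a,b)]) T i = uu en T i" by (rule uu_snoc) (simp add: i' n_def[symmetric])
        also have "uu en T i = uu en T' i" unfolding T_def uu_def using False by auto
        finally have e1: "uu en T' i = uu (en @ [(a,b)]) T i" by simp
        have "vv (en @ [(a,b)]) T (\<sigma> i) = vv en T (\<sigma> i)" by (rule vv_snoc) (simp add: si n_def[symmetric])
        also have "vv en T (\<sigma> i) = vv en T' (\<sigma> i)" unfolding T_def vv_def using si by auto
        finally have e2: "vv en T' (\<sigma> i) = vv (en @ [(a,b)]) T (\<sigma> i)" by simp
        show ?thesis using ch[OF i'] e1 e2 by simp
      qed
    qed
    thus "z \<in> fib (en @ [(a,b)]) P" using zT by simp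
  qed
qed

lemma fib_finite: "finite (fib en P)"
proof -
  have "fib en P \<subseteq> Pow {..<length en} \<times> {\<sigma>. \<sigma> permutes {..<length en}}"
    by (auto simp: fib_def)
  moreover have "finite (Pow {..<length en} \<times> {\<sigma>. \<sigma> permutes {..<length en}})"
    by (intro finite_cartesian_product finite_Pow_iff[THEN iffD2] finite_permutations) auto
  ultimately show ?thesis by (rule finite_subset)
qed

lemma case1_sum:
  fixes en :: "('w \<times> 'w) list"
  assumes good: "good (en @ [(a,b)])" and pm: "perfect_matching (pts (en @ [(a,b)])) P"
    and ab: "{a,b} \<in> P"
  shows "(\<Sum>x\<in>fib (en @ [(a,b)]) P. real_of_int (sign (snd x)))
       = 2 * (\<Sum>x\<in>fib en (P - {{a,b}}). real_of_int (sign (snd x)))"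
proof -
  define h :: "(nat set \<times> (nat \<Rightarrow> nat)) \<times> bool \<Rightarrow> nat set \<times> (nat \<Rightarrow> nat)" where
    "h = (\<lambda>((T,\<sigma>),\<beta>). (if \<beta> then insert (length en) T else T, \<sigma>))"
  define A where "A = fib en (P - {{a,b}})"
  have inj: "inj_on h (A \<times> (UNIV::bool set))"
  proof (rule inj_onI)
    fix x y assume x: "x \<in> A \<times> (UNIV::bool set)" and y: "y \<in> A \<times> (UNIV::bool set)" and e: "h x = h y"
    obtain T1 s1 b1 where x1: "x = ((T1, s1), b1)" by (metis prod.exhaust)
    obtain T2 s2 b2 where y1: "y = ((T2, s2), b2)" by (metis prod.exhaust)
    have T1: "T1 \<subseteq> {..<length en}" using x x1 by (auto simp: A_def fib_def)
    have T2: "T2 \<subseteq> {..<length en}" using y y1 by (auto simp: A_def fib_def)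
    have e1: "(if b1 then insert (length en) T1 else T1) = (if b2 then insert (length en) T2 else T2)"
      and e2: "s1 = s2" using e x1 y1 by (auto simp: h_def)
    have nT1: "length en \<notin> T1" using T1 by auto
    have nT2: "length en \<notin> T2" using T2 by auto
    have "b1 = b2" using e1 nT1 nT2 by (cases b1; cases b2) auto
    moreover have "T1 = T2"
    proof -
      have "(if b1 then insert (length en) T1 else T1) - {length en} = T1" using nT1 by auto
      moreover have "(if b2 then insert (length en) T2 else T2) - {length en} = T2" using nT2 by auto
      ultimately show ?thesis using e1 by simp
    qed
    ultimately show "x = y" using x1 y1 e2 by simp
  qed
  have "(\<Sum>x\<in>fib (en @ [(a,b)]) P. real_of_int (sign (snd x)))
      = (\<Sum>x\<in>h ` (A \<times> (UNIV::bool set)). real_of_int (sign (snd x)))"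
    using case1_fib[OF good pm ab] by (simp add: h_def A_def)
  also have "\<dots> = (\<Sum>x\<in>A \<times> (UNIV::bool set). real_of_int (sign (snd (h x))))"
    using sum.reindex[OF inj] by simp
  also have "\<dots> = (\<Sum>x\<in>A \<times> (UNIV::bool set). real_of_int (sign (snd (fst x))))"
  proof -
    have "snd (h x) = snd (fst x)" for x by (cases x) (auto simp: h_def)
    thus ?thesis by simp
  qed
  also have "\<dots> = (\<Sum>x\<in>A. \<Sum>\<beta>\<in>(UNIV::bool set). real_of_int (sign (snd x)))"
    using sum.cartesian_product[where g="\<lambda>x \<beta>. real_of_int (sign (snd x))" and A=A and B="UNIV::bool set"] by (simp add: split_def)
  also have "\<dots> = (\<Sum>x\<in>A. 2 * real_of_int (sign (snd x)))"
    by (simp add: UNIV_bool)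
  also have "\<dots> = 2 * (\<Sum>x\<in>A. real_of_int (sign (snd x)))"
    by (simp add: sum_distrib_left)
  finally show ?thesis by (simp add: A_def)
qed

lemma case1_pm:
  fixes en :: "('w \<times> 'w) list"
  assumes good: "good (en @ [(a,b)])" and pm: "perfect_matching (pts (en @ [(a,b)])) P"
    and ab: "{a,b} \<in> P"
  shows "perfect_matching (pts en) (P - {{a,b}})"
proof (rule pmI)
  note g = good_snoc[OF good]
  fix p assume p: "p \<in> P - {{a,b}}"
  have p1: "p \<subseteq> insert a (insert b (pts en))" using pm_sub[OF pm] p by (auto simp: pts_snoc)
  show "card p = 2" using pm_card[OF pm] p by auto
  have "a \<notin> p"
  proof
    assume "a \<in> p" hence "p = {a,b}" using pm_unique[OF pm _ ab, of p a] p by auto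
    thus False using p by auto
  qed
  moreover have "b \<notin> p"
  proof
    assume "b \<in> p" hence "p = {a,b}" using pm_unique[OF pm _ ab, of p b] p by auto
    thus False using p by auto
  qed
  ultimately show "p \<subseteq> pts en" using p1 by auto
next
  note g = good_snoc[OF good]
  fix w assume w: "w \<in> pts en"
  have "w \<in> pts (en @ [(a,b)])" using w by (simp add: pts_snoc)
  then obtain p where p: "p \<in> P" "w \<in> p" using pm_ex[OF pm] by blast
  have "w \<noteq> a" "w \<noteq> b" using w g by auto
  hence "p \<noteq> {a,b}" using p by auto
  thus "\<exists>p\<in>P - {{a,b}}. w \<in> p" using p by blast
next
  fix p q w assume "p \<in> P - {{a,b}}" "q \<in> P - {{a,b}}" "w \<in> p" "w \<in> q"
  thus "p = q" using pm_unique[OF pm] by blast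
qed

lemma pm_partner:
  assumes "perfect_matching W P" "w \<in> W"
  obtains z where "{w, z} \<in> P" "z \<noteq> w"
proof -
  obtain p where p: "p \<in> P" "w \<in> p" using pm_ex[OF assms] by blast
  have "card p = 2" using pm_card[OF assms(1) p(1)] .
  then obtain u v where uv: "p = {u,v}" "u \<noteq> v" by (auto simp: card_2_iff)
  show ?thesis
  proof (cases "w = u")
    case True thus ?thesis using that uv p by auto
  next
    case False hence "w = v" using uv p by auto
    thus ?thesis using that[of u] uv p by (auto simp: insert_commute)
  qed
qed

locale ctx2 =
  fixes en :: "('w \<times> 'w) list" and a b x y :: 'w and P :: "'w set set"
  assumes good: "good (en @ [(a,b)])" and pm: "perfect_matching (pts (en @ [(a,b)])) P"
    and nab: "{a,b} \<notin> P" and ax: "{a,x} \<in> P" "x \<noteq> a" and bby: "{b,y} \<in> P" "y \<noteq> b"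
begin

abbreviation "E \<equiv> en @ [(a,b)]"
abbreviation "n \<equiv> length en"
definition "P' = insert {x,y} (P - {{a,x},{b,y}})"

lemma g: "good en" "a \<noteq> b" "a \<notin> pts en" "b \<notin> pts en" using good_snoc[OF good] by auto

lemma xb: "x \<noteq> b" using ax nab by auto
lemma ya: "y \<noteq> a" using bby nab by (auto simp: insert_commute)

lemma x_pts: "x \<in> pts en"
proof -
  have "{a,x} \<subseteq> pts E" using pm_sub[OF pm ax(1)] .
  thus ?thesis using ax xb by (auto simp: pts_snoc)
qed
lemma y_pts: "y \<in> pts en"
proof -
  have "{b,y} \<subseteq> pts E" using pm_sub[OF pm bby(1)] .
  thus ?thesis using bby ya by (auto simp: pts_snoc)
qed
lemma xy: "x \<noteq> y"
proof
  assume "x = y"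
  hence "{a,x} = {b,y}" using pm_unique[OF pm ax(1) bby(1), of x] by auto
  thus False using g(2) ax(2) xb ya by (auto simp: doubleton_eq_iff)
qed

lemma Pa: "p \<in> P \<Longrightarrow> a \<in> p \<Longrightarrow> p = {a,x}" using pm_unique[OF pm _ ax(1), of p a] by auto
lemma Pb: "p \<in> P \<Longrightarrow> b \<in> p \<Longrightarrow> p = {b,y}" using pm_unique[OF pm _ bby(1), of p b] by auto
lemma Px: "p \<in> P \<Longrightarrow> x \<in> p \<Longrightarrow> p = {a,x}" using pm_unique[OF pm _ ax(1), of p x] by auto
lemma Py: "p \<in> P \<Longrightarrow> y \<in> p \<Longrightarrow> p = {b,y}" using pm_unique[OF pm _ bby(1), of p y] by auto

lemma P'_A: "p \<in> P' \<Longrightarrow> p \<subseteq> pts en \<and> card p = 2"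
proof -
  assume p: "p \<in> P'"
  show "p \<subseteq> pts en \<and> card p = 2"
  proof (cases "p = {x,y}")
    case True thus ?thesis using x_pts y_pts xy by auto
  next
    case False
    hence p': "p \<in> P" "p \<noteq> {a,x}" "p \<noteq> {b,y}" using p by (auto simp: P'_def)
    have p1: "p \<subseteq> insert a (insert b (pts en))" using pm_sub[OF pm p'(1)] by (simp add: pts_snoc)
    have "a \<notin> p" using Pa p' by blast
    moreover have "b \<notin> p" using Pb p' by blast
    ultimately show ?thesis using p1 pm_card[OF pm p'(1)] by auto
  qed
qed

lemma P'_pm: "perfect_matching (pts en) P'"
proof (rule pmI)
  show "\<And>p. p \<in> P' \<Longrightarrow> p \<subseteq> pts en" using P'_A by blast
  show "\<And>p. p \<in> P' \<Longrightarrow> card p = 2" using P'_A by blast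
next
  fix w assume w: "w \<in> pts en"
  show "\<exists>p\<in>P'. w \<in> p"
  proof (cases "w \<in> {x,y}")
    case True thus ?thesis by (auto simp: P'_def)
  next
    case False
    have "w \<in> pts E" using w by (simp add: pts_snoc)
    then obtain p where p: "p \<in> P" "w \<in> p" using pm_ex[OF pm] by blast
    have "w \<noteq> a" "w \<noteq> b" using w g by auto
    hence "p \<noteq> {a,x}" "p \<noteq> {b,y}" using p False by auto
    thus ?thesis using p by (auto simp: P'_def)
  qed
next
  fix p q w assume pq: "p \<in> P'" "q \<in> P'" "w \<in> p" "w \<in> q"
  show "p = q"
  proof (cases "p = {x,y} \<or> q = {x,y}")
    case True
    { fix r assume r: "r \<in> P'" "r \<noteq> {x,y}" and wr: "w \<in> r" and w: "w \<in> {x,y}"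
      hence r': "r \<in> P" "r \<noteq> {a,x}" "r \<noteq> {b,y}" by (auto simp: P'_def)
      have False using w wr r' Px Py by blast }
    thus ?thesis using True pq by blast
  next
    case False
    hence "p \<in> P" "q \<in> P" using pq by (auto simp: P'_def)
    thus ?thesis using pm_unique[OF pm] pq by blast
  qed
qed

end

context ctx2
begin

lemma lenE: "length E = Suc n" by simp

lemma struct:
  assumes m: "(T, \<sigma>) \<in> fib E P"
  shows "\<sigma> n < n \<and> inv \<sigma> n < n \<and> \<sigma> (inv \<sigma> n) = n \<and>
    (n \<in> T \<longrightarrow> vv en T (\<sigma> n) = y \<and> uu en T (inv \<sigma> n) = x) \<and>
    (n \<notin> T \<longrightarrow> vv en T (\<sigma> n) = x \<and> uu en T (inv \<sigma> n) = y)"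
proof -
  have s: "\<sigma> permutes {..<Suc n}" and ch: "\<And>i. i < Suc n \<Longrightarrow> {uu E T i, vv E T (\<sigma> i)} \<in> P"
    using m unfolding fib_mem lenE by auto
  define k where "k = \<sigma> n"
  define i where "i = inv \<sigma> n"
  have k1: "k < Suc n" using perm_lt[OF s] by (simp add: k_def)
  have un: "uu E T n = (if n \<in> T then b else a)" using uu_last[of en a b T] .
  have vn: "vv E T n = (if n \<in> T then a else b)" using vv_last[of en a b T] .
  have kn: "k \<noteq> n"
  proof
    assume "k = n"
    hence "{uu E T n, vv E T n} \<in> P" using ch[of n] by (simp add: k_def)
    hence "{a,b} \<in> P" using un vn by (cases "n \<in> T") (auto simp: insert_commute)
    thus False using nab by simp
  qed
  hence k: "k < n" using k1 by simp
  have si: "\<sigma> i = n" unfolding i_def using permutes_inverses(1)[OF s] .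
  have i1: "i < Suc n" unfolding i_def using perm_lt[OF permutes_inv[OF s]] by simp
  have "i \<noteq> n" using si kn k_def by auto
  hence i: "i < n" using i1 by simp
  have vk: "vv E T k = vv en T k" using vv_snoc[OF k] .
  have ui: "uu E T i = uu en T i" using uu_snoc[OF i] .
  have vkp: "vv en T k \<in> pts en" using vv_pts[OF k] .
  have uip: "uu en T i \<in> pts en" using uu_pts[OF i] .
  have cn: "{uu E T n, vv en T k} \<in> P" using ch[of n] vk by (simp add: k_def)
  have ci: "{uu en T i, vv E T n} \<in> P" using ch[OF i1] ui si by simp
  have A: "n \<in> T \<longrightarrow> vv en T k = y \<and> uu en T i = x"
  proof
    assume nT: "n \<in> T"
    have "{b, vv en T k} = {b,y}" using Pb[OF cn] un nT by simp
    hence 1: "vv en T k = y" using vkp g(4) by (auto simp: doubleton_eq_iff)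
    have "{uu en T i, a} = {a,x}" using Pa[OF ci] vn nT by simp
    hence 2: "uu en T i = x" using uip g(3) by (auto simp: doubleton_eq_iff)
    show "vv en T k = y \<and> uu en T i = x" using 1 2 by simp
  qed
  have B: "n \<notin> T \<longrightarrow> vv en T k = x \<and> uu en T i = y"
  proof
    assume nT: "n \<notin> T"
    have "{a, vv en T k} = {a,x}" using Pa[OF cn] un nT by simp
    hence 1: "vv en T k = x" using vkp g(3) by (auto simp: doubleton_eq_iff)
    have "{uu en T i, b} = {b,y}" using Pb[OF ci] vn nT by simp
    hence 2: "uu en T i = y" using uip g(4) by (auto simp: doubleton_eq_iff)
    show "vv en T k = x \<and> uu en T i = y" using 1 2 by simp
  qed
  show ?thesis using k i si A B by (simp add: k_def i_def)
qed

definition F :: "nat set \<times> (nat \<Rightarrow> nat) \<Rightarrow> nat set \<times> (nat \<Rightarrow> nat)" where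
  "F z = (fst z - {n}, Transposition.transpose n (snd z n) \<circ> snd z)"


lemma F_mem:
  assumes m: "(T, \<sigma>) \<in> fib E P"
  shows "F (T, \<sigma>) \<in> fib en P'"
proof -
  have s: "\<sigma> permutes {..<Suc n}" and ch: "\<And>i. i < Suc n \<Longrightarrow> {uu E T i, vv E T (\<sigma> i)} \<in> P"
    and T: "T \<subseteq> {..<Suc n}"
    using m unfolding fib_mem lenE by auto
  define k where "k = \<sigma> n"
  define i where "i = inv \<sigma> n"
  note st = struct[OF m, folded k_def i_def]
  have k: "k < n" and i: "i < n" and si: "\<sigma> i = n" using st by auto
  define \<sigma>' where "\<sigma>' = Transposition.transpose n k \<circ> \<sigma>"
  have tp: "Transposition.transpose n k permutes {..<Suc n}" using k by (intro permutes_swap_id) auto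
  have s1: "\<sigma>' permutes {..<Suc n}" unfolding \<sigma>'_def by (rule permutes_compose[OF s tp])
  have sn: "\<sigma>' n = n" by (simp add: \<sigma>'_def k_def)
  have s': "\<sigma>' permutes {..<n}" using s1 by (rule permutes_superset) (use sn in auto)
  have injs: "inj \<sigma>" using s by (rule permutes_inj)
  have "(T - {n}, \<sigma>') \<in> fib en P'"
    unfolding fib_mem
  proof (intro conjI allI impI s')
    show "T - {n} \<subseteq> {..<n}" using T by auto
    fix j assume j: "j < n"
    have sj: "\<sigma>' j < n" using perm_lt[OF s' j] .
    have uj: "uu en (T - {n}) j = uu en T j" using j by (simp add: uu_minus)
    have vj: "vv en (T - {n}) (\<sigma>' j) = vv en T (\<sigma>' j)" using sj by (simp add: vv_minus)
    show "{uu en (T - {n}) j, vv en (T - {n}) (\<sigma>' j)} \<in> P'"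
    proof (cases "j = i")
      case True
      have "\<sigma>' j = k" using True si by (simp add: \<sigma>'_def)
      hence "{uu en (T - {n}) j, vv en (T - {n}) (\<sigma>' j)} = {x,y}"
        using uj vj True st by (cases "n \<in> T") (auto simp: k_def i_def insert_commute)
      thus ?thesis by (simp add: P'_def)
    next
      case False
      have "\<sigma> j \<noteq> n" using False si injs by (metis injD)
      moreover have "\<sigma> j \<noteq> k" using j injs by (metis injD k_def less_irrefl)
      ultimately have e: "\<sigma>' j = \<sigma> j" by (simp add: \<sigma>'_def)
      have sjn: "\<sigma> j < n" using sj e by simp
      have c: "{uu E T j, vv E T (\<sigma> j)} \<in> P" using ch[of j] j by simp
      have "uu E T j = uu en T j" using uu_snoc[OF j] .
      moreover have "vv E T (\<sigma> j) = vv en T (\<sigma> j)" using vv_snoc[OF sjn] .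
      ultimately have c': "{uu en T j, vv en T (\<sigma> j)} \<in> P" using c by simp
      have "uu en T j \<in> pts en" "vv en T (\<sigma> j) \<in> pts en" using uu_pts[OF j] vv_pts[OF sjn] by auto
      hence "a \<notin> {uu en T j, vv en T (\<sigma> j)}" "b \<notin> {uu en T j, vv en T (\<sigma> j)}" using g by auto
      hence "{uu en T j, vv en T (\<sigma> j)} \<noteq> {a,x}" "{uu en T j, vv en T (\<sigma> j)} \<noteq> {b,y}" by auto
      thus ?thesis using c' uj vj e by (simp add: P'_def)
    qed
  qed
  thus ?thesis by (simp add: F_def \<sigma>'_def k_def)
qed


lemma nT_iff:
  assumes m: "(T, \<sigma>) \<in> fib E P"
  shows "n \<in> T \<longleftrightarrow> x \<in> uu en (T - {n}) ` {..<n}"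
proof
  assume nT: "n \<in> T"
  have i: "inv \<sigma> n < n" and ux: "uu en T (inv \<sigma> n) = x" using struct[OF m] nT by auto
  have "uu en (T - {n}) (inv \<sigma> n) = x" using ux i by (simp add: uu_minus)
  thus "x \<in> uu en (T - {n}) ` {..<n}" using i by (metis imageI lessThan_iff)
next
  assume "x \<in> uu en (T - {n}) ` {..<n}"
  then obtain j where j: "j < n" "x = uu en (T - {n}) j" by auto
  hence xj: "x = uu en T j" by (simp add: uu_minus)
  show "n \<in> T"
  proof (rule ccontr)
    assume "n \<notin> T"
    hence "vv en T (\<sigma> n) = x" and k: "\<sigma> n < n" using struct[OF m] by auto
    thus False using uv_ne[OF g(1) j(1) k, of T] xj by simp
  qed
qed

lemma F_inj: "inj_on F (fib E P)"
proof (rule inj_onI)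
  fix z1 z2 assume m1: "z1 \<in> fib E P" and m2: "z2 \<in> fib E P" and e: "F z1 = F z2"
  obtain T1 s1 where z1: "z1 = (T1, s1)" by (cases z1)
  obtain T2 s2 where z2: "z2 = (T2, s2)" by (cases z2)
  have m1': "(T1, s1) \<in> fib E P" using m1 z1 by simp
  have m2': "(T2, s2) \<in> fib E P" using m2 z2 by simp
  have e1: "T1 - {n} = T2 - {n}"
    and e2: "Transposition.transpose n (s1 n) \<circ> s1 = Transposition.transpose n (s2 n) \<circ> s2"
    using e z1 z2 by (simp_all add: F_def)
  have T1: "T1 \<subseteq> {..<Suc n}" using m1' by (simp add: fib_mem)
  have T2: "T2 \<subseteq> {..<Suc n}" using m2' by (simp add: fib_mem)
  have nn: "n \<in> T1 \<longleftrightarrow> n \<in> T2" unfolding nT_iff[OF m1'] nT_iff[OF m2'] e1 by (rule refl)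
  have TT: "T1 = T2"
  proof
    show "T1 \<subseteq> T2" using e1 nn by blast
    show "T2 \<subseteq> T1" using e1 nn by blast
  qed
  have k1: "s1 n < n" using struct[OF m1'] by (rule conjunct1)
  have k2: "s2 n < n" using struct[OF m2'] by (rule conjunct1)
  have "vv en T1 (s1 n) = vv en T1 (s2 n)"
  proof (cases "n \<in> T1")
    case True
    have 1: "vv en T1 (s1 n) = y" using struct[OF m1'] True by blast
    have 2: "vv en T2 (s2 n) = y" using struct[OF m2'] True nn by blast
    show ?thesis using 1 2 TT by simp
  next
    case False
    have 1: "vv en T1 (s1 n) = x" using struct[OF m1'] False by blast
    have 2: "vv en T2 (s2 n) = x" using struct[OF m2'] False nn by blast
    show ?thesis using 1 2 TT by simp
  qed
  hence kk: "s1 n = s2 n" using vv_inj[OF g(1) k1 k2] by simp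
  have "s1 = Transposition.transpose n (s1 n) \<circ> (Transposition.transpose n (s1 n) \<circ> s1)"
    by (simp add: fun_eq_iff)
  also have "\<dots> = Transposition.transpose n (s1 n) \<circ> (Transposition.transpose n (s2 n) \<circ> s2)" using e2 by simp
  also have "\<dots> = s2" using kk by (simp add: fun_eq_iff)
  finally show "z1 = z2" using z1 z2 TT by simp
qed

lemma F_surj:
  assumes m: "(T', \<sigma>') \<in> fib en P'"
  shows "\<exists>z\<in>fib E P. F z = (T', \<sigma>')"
proof -
  have s': "\<sigma>' permutes {..<n}" and T': "T' \<subseteq> {..<n}"
    and ch: "\<And>j. j < n \<Longrightarrow> {uu en T' j, vv en T' (\<sigma>' j)} \<in> P'"
    using m unfolding fib_mem by auto
  obtain j where j: "j < n" "x \<in> {uu en T' j, vv en T' (\<sigma>' j)}" using chord_cover[OF s' x_pts] by blast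
  have xyP: "{x,y} \<in> P'" by (simp add: P'_def)
  have cj: "{uu en T' j, vv en T' (\<sigma>' j)} = {x,y}"
    using pm_unique[OF P'_pm ch[OF j(1)] xyP, of x] j(2) by simp
  define k where "k = \<sigma>' j"
  have k: "k < n" using perm_lt[OF s' j(1)] by (simp add: k_def)
  define A where "A = (uu en T' j = x)"
  have cA: "A \<Longrightarrow> uu en T' j = x \<and> vv en T' k = y" using cj xy by (auto simp: A_def k_def doubleton_eq_iff)
  have cB: "\<not> A \<Longrightarrow> uu en T' j = y \<and> vv en T' k = x" using cj by (auto simp: A_def k_def doubleton_eq_iff)
  define T where "T = (if A then insert n T' else T')"
  define \<sigma> where "\<sigma> = Transposition.transpose n k \<circ> \<sigma>'"
  have nT': "n \<notin> T'" using T' by auto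
  have nT: "n \<in> T \<longleftrightarrow> A" using nT' by (simp add: T_def)
  have s'n: "\<sigma>' n = n" using s' by (simp add: permutes_not_in)
  have sn: "\<sigma> n = k" using s'n by (simp add: \<sigma>_def)
  have sj: "\<sigma> j = n" by (simp add: \<sigma>_def k_def)
  have tp: "Transposition.transpose n k permutes {..<Suc n}" using k by (intro permutes_swap_id) auto
  have s1: "\<sigma>' permutes {..<Suc n}" using s' by (rule permutes_subset) auto
  have s: "\<sigma> permutes {..<Suc n}" unfolding \<sigma>_def by (rule permutes_compose[OF s1 tp])
  have uT: "\<And>m. m < n \<Longrightarrow> uu E T m = uu en T' m"
    using uu_snoc by (simp add: T_def uu_ins)
  have vT: "\<And>m. m < n \<Longrightarrow> vv E T m = vv en T' m"
    using vv_snoc by (simp add: T_def vv_ins)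
  have injs': "inj \<sigma>'" using s' by (rule permutes_inj)
  have mem: "(T, \<sigma>) \<in> fib E P"
    unfolding fib_mem lenE
  proof (intro conjI allI impI s)
    show "T \<subseteq> {..<Suc n}" using T' by (auto simp: T_def)
    fix m assume m: "m < Suc n"
    show "{uu E T m, vv E T (\<sigma> m)} \<in> P"
    proof (cases "m = n")
      case True
      have "{uu E T m, vv E T (\<sigma> m)} = (if A then {b,y} else {a,x})"
        using True sn vT[OF k] uu_last[of en a b T] nT cA cB by auto
      thus ?thesis using ax bby by simp
    next
      case False
      hence m': "m < n" using m by simp
      show ?thesis
      proof (cases "m = j")
        case True
        have "{uu E T m, vv E T (\<sigma> m)} = (if A then {a,x} else {b,y})"
          using True sj uT[OF j(1)] vv_last[of en a b T] nT cA cB by (auto simp: insert_commute)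
        thus ?thesis using ax bby by simp
      next
        case False
        have "\<sigma>' m \<noteq> k" using False injs' by (metis injD k_def)
        moreover have "\<sigma>' m < n" using perm_lt[OF s' m'] .
        ultimately have e: "\<sigma> m = \<sigma>' m" by (simp add: \<sigma>_def)
        have c: "{uu en T' m, vv en T' (\<sigma>' m)} \<in> P'" using ch[OF m'] .
        have "{uu en T' m, vv en T' (\<sigma>' m)} \<noteq> {x,y}"
        proof
          assume "{uu en T' m, vv en T' (\<sigma>' m)} = {x,y}"
          hence "{uu en T' m, vv en T' (\<sigma>' m)} = {uu en T' j, vv en T' (\<sigma>' j)}" using cj by simp
          hence "m = j" using chord_inj[OF g(1) m' j(1) _ s'] by blast
          thus False using False by simp
        qed
        hence "{uu en T' m, vv en T' (\<sigma>' m)} \<in> P" using c by (auto simp: P'_def)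
        thus ?thesis using uT[OF m'] vT[OF perm_lt[OF s' m']] e by simp
      qed
    qed
  qed
  have "F (T, \<sigma>) = (T', \<sigma>')"
  proof -
    have "T - {n} = T'" using nT' by (auto simp: T_def)
    moreover have "Transposition.transpose n (\<sigma> n) \<circ> \<sigma> = \<sigma>'" using sn by (simp add: \<sigma>_def fun_eq_iff)
    ultimately show ?thesis by (simp add: F_def)
  qed
  thus ?thesis using mem by blast
qed

lemma F_bij: "bij_betw F (fib E P) (fib en P')"
proof (rule bij_betw_imageI[OF F_inj])
  show "F ` fib E P = fib en P'"
  proof
    show "F ` fib E P \<subseteq> fib en P'" using F_mem by auto
    show "fib en P' \<subseteq> F ` fib E P"
    proof
      fix z assume zm: "z \<in> fib en P'"
      obtain T' \<sigma>' where z: "z = (T', \<sigma>')" by (cases z)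
      obtain w where "w \<in> fib E P" "F w = (T', \<sigma>')" using F_surj zm z by blast
      thus "z \<in> F ` fib E P" using z by (metis imageI)
    qed
  qed
qed

lemma sign_F:
  assumes m: "z \<in> fib E P"
  shows "sign (snd (F z)) = - sign (snd z)"
proof -
  obtain T \<sigma> where z: "z = (T, \<sigma>)" by (cases z)
  have m': "(T, \<sigma>) \<in> fib E P" using m z by simp
  have s: "\<sigma> permutes {..<Suc n}" using m' unfolding fib_mem lenE by auto
  have k: "\<sigma> n < n" using struct[OF m'] by auto
  have "sign (Transposition.transpose n (\<sigma> n) \<circ> \<sigma>) = sign (Transposition.transpose n (\<sigma> n)) * sign \<sigma>"
  proof (rule sign_compose)
    have "Transposition.transpose n (\<sigma> n) permutes {..<Suc n}" using k by (intro permutes_swap_id) auto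
    thus "permutation (Transposition.transpose n (\<sigma> n))" by (rule permutes_imp_permutation[rotated]) simp
    show "permutation \<sigma>" using s by (rule permutes_imp_permutation[rotated]) simp
  qed
  also have "\<dots> = - sign \<sigma>" using k by (simp add: sign_swap_id)
  finally show ?thesis using z by (simp add: F_def)
qed

lemma sum2:
  "(\<Sum>z\<in>fib E P. real_of_int (sign (snd z))) = - (\<Sum>z\<in>fib en P'. real_of_int (sign (snd z)))"
proof -
  have "(\<Sum>z\<in>fib en P'. real_of_int (sign (snd z))) = (\<Sum>z\<in>fib E P. real_of_int (sign (snd (F z))))"
    using sum.reindex_bij_betw[OF F_bij, of "\<lambda>z. real_of_int (sign (snd z))"] by simp
  also have "\<dots> = (\<Sum>z\<in>fib E P. - real_of_int (sign (snd z)))"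
    by (rule sum.cong) (auto simp: sign_F)
  also have "\<dots> = - (\<Sum>z\<in>fib E P. real_of_int (sign (snd z)))" by (simp add: sum_negf)
  finally show ?thesis by simp
qed

end

lemma pts_finite: "finite (pts en)" by (simp add: pts_def)

context ctx2
begin

lemma c2_case2: "c2 (pts E) P (Mof E) = c2 (pts en) P' (Mof en)"
proof -
  have pmM: "perfect_matching (pts E) (Mof E)" using Mof_pm[OF good] .
  have pmM': "perfect_matching (pts en) (Mof en)" using Mof_pm[OF g(1)] .
  have "card (insert a (insert b (pts en)) // ((adjE (P \<union> Mof E))\<^sup>* \<inter> insert a (insert b (pts en)) \<times> insert a (insert b (pts en))))
       = card (pts en // ((adjE (P' \<union> Mof en))\<^sup>* \<inter> pts en \<times> pts en))"
  proof (rule case2_card)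
    show "\<forall>p\<in>P' \<union> Mof en. p \<subseteq> pts en" using P'_A pm_sub[OF pmM'] by blast
    show "a \<notin> pts en" "b \<notin> pts en" using g by auto
    show "{x,y} \<in> P' \<union> Mof en" by (simp add: P'_def)
    show "P \<union> Mof E \<subseteq> P' \<union> Mof en \<union> {{a,b},{a,x},{b,y}}"
      by (auto simp: P'_def Mof_snoc)
    show "{a,b} \<in> P \<union> Mof E" by (simp add: Mof_snoc)
    show "{a,x} \<in> P \<union> Mof E" "{b,y} \<in> P \<union> Mof E" using ax bby by auto
    show "\<forall>p\<in>P' \<union> Mof en. p \<in> P \<union> Mof E \<or> p = {x,y}" by (auto simp: P'_def Mof_snoc)
    show "finite (pts en)" by (rule pts_finite)
  qed
  thus ?thesis using c2_eq[OF pm pmM] c2_eq[OF P'_pm pmM'] by (simp add: pts_snoc)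
qed

end

lemma c2_case1:
  fixes en :: "('w \<times> 'w) list"
  assumes good: "good (en @ [(a,b)])" and pm: "perfect_matching (pts (en @ [(a,b)])) P"
    and ab: "{a,b} \<in> P"
  shows "c2 (pts (en @ [(a,b)])) P (Mof (en @ [(a,b)])) = Suc (c2 (pts en) (P - {{a,b}}) (Mof en))"
proof -
  note g = good_snoc[OF good]
  have pmM: "perfect_matching (pts (en @ [(a,b)])) (Mof (en @ [(a,b)]))" using Mof_pm[OF good] .
  have pmM': "perfect_matching (pts en) (Mof en)" using Mof_pm[OF g(1)] .
  have pm': "perfect_matching (pts en) (P - {{a,b}})" using case1_pm[OF good pm ab] .
  have "card (insert a (insert b (pts en)) // ((adjE (P \<union> Mof (en @ [(a,b)])))\<^sup>* \<inter> insert a (insert b (pts en)) \<times> insert a (insert b (pts en))))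
       = Suc (card (pts en // ((adjE ((P - {{a,b}}) \<union> Mof en))\<^sup>* \<inter> pts en \<times> pts en)))"
  proof (rule case1_card)
    show "\<forall>p\<in>(P - {{a,b}}) \<union> Mof en. p \<subseteq> pts en" using pm_sub[OF pm'] pm_sub[OF pmM'] by blast
    show "a \<notin> pts en" "b \<notin> pts en" "a \<noteq> b" using g by auto
    show "P \<union> Mof (en @ [(a,b)]) = insert {a,b} ((P - {{a,b}}) \<union> Mof en)"
      using ab by (auto simp: Mof_snoc)
    show "finite (pts en)" by (rule pts_finite)
  qed
  thus ?thesis using c2_eq[OF pm pmM] c2_eq[OF pm' pmM'] by (simp add: pts_snoc)
qed

lemma core:
  "good en \<Longrightarrow> perfect_matching (pts en) P \<Longrightarrow>
   (\<Sum>z\<in>fib en P. real_of_int (sign (snd z))) = wt (length en) (c2 (pts en) P (Mof en))"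
proof (induction en arbitrary: P rule: rev_induct)
  case Nil
  have P: "P = {}"
  proof (rule ccontr)
    assume "P \<noteq> {}"
    then obtain p where p: "p \<in> P" by blast
    have "p \<subseteq> {}" using pm_sub[OF Nil(2) p] by (simp add: pts_def)
    moreover have "card p = 2" using pm_card[OF Nil(2) p] .
    ultimately show False by simp
  qed
  have f: "fib [] P = {({}, id)}"
    by (auto simp: fib_def)
  have c: "c2 (pts []) P (Mof []) = 0" by (simp add: c2_def pts_def)
  show ?case using f c by (simp add: wt_def)
next
  case (snoc ab en)
  obtain a b where ab: "ab = (a, b)" by (cases ab)
  have good: "good (en @ [(a,b)])" using snoc.prems(1) ab by simp
  have pm: "perfect_matching (pts (en @ [(a,b)])) P" using snoc.prems(2) ab by simp
  note g = good_snoc[OF good]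
  show ?case
  proof (cases "{a,b} \<in> P")
    case True
    have "(\<Sum>z\<in>fib (en @ [(a,b)]) P. real_of_int (sign (snd z)))
        = 2 * (\<Sum>z\<in>fib en (P - {{a,b}}). real_of_int (sign (snd z)))"
      using case1_sum[OF good pm True] .
    also have "\<dots> = 2 * wt (length en) (c2 (pts en) (P - {{a,b}}) (Mof en))"
      using snoc.IH[OF g(1) case1_pm[OF good pm True]] by simp
    also have "\<dots> = wt (length (en @ [(a,b)])) (c2 (pts (en @ [(a,b)])) P (Mof (en @ [(a,b)])))"
      using c2_case1[OF good pm True] by (simp add: wt_suc_suc)
    finally show ?thesis using ab by simp
  next
    case False
    have aP: "a \<in> pts (en @ [(a,b)])" "b \<in> pts (en @ [(a,b)])" by (auto simp: pts_snoc)
    obtain x where x: "{a,x} \<in> P" "x \<noteq> a" using pm_partner[OF pm aP(1)] by blast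
    obtain y where y: "{b,y} \<in> P" "y \<noteq> b" using pm_partner[OF pm aP(2)] by blast
    interpret C: ctx2 en a b x y P using good pm False x y by unfold_locales
    have "(\<Sum>z\<in>fib (en @ [(a,b)]) P. real_of_int (sign (snd z)))
        = - (\<Sum>z\<in>fib en C.P'. real_of_int (sign (snd z)))"
      using C.sum2 .
    also have "\<dots> = - wt (length en) (c2 (pts en) C.P' (Mof en))"
      using snoc.IH[OF g(1) C.P'_pm] by simp
    also have "\<dots> = wt (length (en @ [(a,b)])) (c2 (pts (en @ [(a,b)])) P (Mof (en @ [(a,b)])))"
      using C.c2_case2 by (simp add: wt_suc)
    finally show ?thesis using ab by simp
  qed
qed

definition PP :: "('w \<times> 'w) list \<Rightarrow> nat set \<times> (nat \<Rightarrow> nat) \<Rightarrow> 'w set set" where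
  "PP en z = (\<lambda>i. {uu en (fst z) i, vv en (fst z) (snd z i)}) ` {..<length en}"

lemma PP_pm:
  assumes g: "good en" and s: "\<sigma> permutes {..<length en}"
  shows "perfect_matching (pts en) (PP en (T, \<sigma>))"
proof (rule pmI)
  fix p assume "p \<in> PP en (T, \<sigma>)"
  then obtain i where i: "i < length en" "p = {uu en T i, vv en T (\<sigma> i)}" by (auto simp: PP_def)
  have si: "\<sigma> i < length en" using perm_lt[OF s i(1)] .
  show "p \<subseteq> pts en" using i uu_pts[OF i(1)] vv_pts[OF si] by auto
  show "card p = 2" using i uv_ne[OF g i(1) si] by auto
next
  fix w assume "w \<in> pts en"
  then obtain i where "i < length en" "w \<in> {uu en T i, vv en T (\<sigma> i)}" using chord_cover[OF s] by blast
  thus "\<exists>p\<in>PP en (T, \<sigma>). w \<in> p" by (auto simp: PP_def)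
next
  fix p q w assume pq: "p \<in> PP en (T, \<sigma>)" "q \<in> PP en (T, \<sigma>)" "w \<in> p" "w \<in> q"
  obtain i where i: "i < length en" "p = {uu en T i, vv en T (\<sigma> i)}" using pq(1) by (auto simp: PP_def)
  obtain j where j: "j < length en" "q = {uu en T j, vv en T (\<sigma> j)}" using pq(2) by (auto simp: PP_def)
  have si: "\<sigma> i < length en" using perm_lt[OF s i(1)] .
  have sj: "\<sigma> j < length en" using perm_lt[OF s j(1)] .
  have inj: "inj \<sigma>" using s by (rule permutes_inj)
  have "i = j"
  proof -
    have "w = uu en T i \<or> w = vv en T (\<sigma> i)" using pq(3) i by auto
    moreover have "w = uu en T j \<or> w = vv en T (\<sigma> j)" using pq(4) j by auto
    ultimately show ?thesis
      using uu_inj[OF g i(1) j(1)] vv_inj[OF g si sj] uv_ne[OF g i(1) sj] uv_ne[OF g j(1) si] inj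
      by (metis injD)
  qed
  thus "p = q" using i j by simp
qed

lemma PP_fib:
  assumes g: "good en" and pm: "perfect_matching (pts en) P"
  shows "{z \<in> Pow {..<length en} \<times> {\<sigma>. \<sigma> permutes {..<length en}}. PP en z = P} = fib en P"
proof (intro equalityI subsetI)
  fix z assume z: "z \<in> {z \<in> Pow {..<length en} \<times> {\<sigma>. \<sigma> permutes {..<length en}}. PP en z = P}"
  obtain T \<sigma> where zz: "z = (T, \<sigma>)" by (cases z)
  have "T \<subseteq> {..<length en}" "\<sigma> permutes {..<length en}" "PP en (T, \<sigma>) = P" using z zz by auto
  hence "(T, \<sigma>) \<in> fib en P" unfolding fib_mem by (auto simp: PP_def)
  thus "z \<in> fib en P" using zz by simp
next
  fix z assume z: "z \<in> fib en P"
  obtain T \<sigma> where zz: "z = (T, \<sigma>)" by (cases z)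
  have T: "T \<subseteq> {..<length en}" and s: "\<sigma> permutes {..<length en}"
    and ch: "\<And>i. i < length en \<Longrightarrow> {uu en T i, vv en T (\<sigma> i)} \<in> P"
  proof -
    have m: "(T, \<sigma>) \<in> fib en P" using z zz by simp
    show "T \<subseteq> {..<length en}" "\<sigma> permutes {..<length en}"
      "\<And>i. i < length en \<Longrightarrow> {uu en T i, vv en T (\<sigma> i)} \<in> P"
      using m unfolding fib_mem by auto
  qed
  have sub: "PP en (T, \<sigma>) \<subseteq> P" using ch by (auto simp: PP_def)
  have "P \<subseteq> PP en (T, \<sigma>)"
  proof
    fix p assume p: "p \<in> P"
    have "card p = 2" using pm_card[OF pm p] .
    then obtain w where w: "w \<in> p" by (metis card.empty ex_in_conv zero_neq_numeral)
    have "w \<in> pts en" using pm_sub[OF pm p] w by auto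
    then obtain q where q: "q \<in> PP en (T, \<sigma>)" "w \<in> q" using pm_ex[OF PP_pm[OF g s]] by blast
    have "q \<in> P" using q sub by auto
    hence "p = q" using pm_unique[OF pm p _ w q(2)] by simp
    thus "p \<in> PP en (T, \<sigma>)" using q by simp
  qed
  hence "PP en (T, \<sigma>) = P" using sub by auto
  thus "z \<in> {z \<in> Pow {..<length en} \<times> {\<sigma>. \<sigma> permutes {..<length en}}. PP en z = P}"
    using zz T s by auto
qed

lemma prod_PP:
  assumes g: "good en" and s: "\<sigma> permutes {..<length en}"
    and Ch: "\<And>x y. x \<noteq> y \<Longrightarrow> Ch {x, y} = Y x y"
  shows "(\<Prod>i<length en. Y (uu en T i) (vv en T (\<sigma> i))) = (\<Prod>p\<in>PP en (T, \<sigma>). Ch p)"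
proof -
  have inj: "inj_on (\<lambda>i. {uu en T i, vv en T (\<sigma> i)}) {..<length en}"
    by (rule inj_onI) (use chord_inj[OF g _ _ _ s] in auto)
  have "(\<Prod>p\<in>PP en (T, \<sigma>). Ch p) = (\<Prod>i<length en. Ch {uu en T i, vv en T (\<sigma> i)})"
    unfolding PP_def using prod.reindex[OF inj, of Ch] by simp
  also have "\<dots> = (\<Prod>i<length en. Y (uu en T i) (vv en T (\<sigma> i)))"
  proof (rule prod.cong[OF refl])
    fix i assume "i \<in> {..<length en}"
    hence "uu en T i \<noteq> vv en T (\<sigma> i)" using uv_ne[OF g] perm_lt[OF s] by auto
    thus "Ch {uu en T i, vv en T (\<sigma> i)} = Y (uu en T i) (vv en T (\<sigma> i))" by (rule Ch)
  qed
  finally show ?thesis by simp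
qed

lemma stepB:
  fixes Y :: "'w \<Rightarrow> 'w \<Rightarrow> real" and Ch :: "'w set \<Rightarrow> real"
  assumes g: "good en" and Ch: "\<And>x y. x \<noteq> y \<Longrightarrow> Ch {x, y} = Y x y"
  shows "(\<Sum>T\<in>Pow {..<length en}. \<Sum>\<sigma>\<in>{\<sigma>. \<sigma> permutes {..<length en}}.
            real_of_int (sign \<sigma>) * (\<Prod>i<length en. Y (uu en T i) (vv en T (\<sigma> i))))
       = (\<Sum>P\<in>{P. perfect_matching (pts en) P}. wt (length en) (c2 (pts en) P (Mof en)) * (\<Prod>p\<in>P. Ch p))"
proof -
  define \<Omega> where "\<Omega> = Pow {..<length en} \<times> {\<sigma>. \<sigma> permutes {..<length en}}"
  define h where "h = (\<lambda>z. real_of_int (sign (snd z)) * (\<Prod>p\<in>PP en z. Ch p))"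
  have finO: "finite \<Omega>" unfolding \<Omega>_def by (intro finite_cartesian_product finite_permutations) auto
  have finPM: "finite {P. perfect_matching (pts en) P}"
  proof (rule finite_subset)
    show "{P. perfect_matching (pts en) P} \<subseteq> Pow (Pow (pts en))" using pm_sub by blast
    show "finite (Pow (Pow (pts en)))" using pts_finite by simp
  qed
  have img: "PP en ` \<Omega> \<subseteq> {P. perfect_matching (pts en) P}"
  proof
    fix P assume "P \<in> PP en ` \<Omega>"
    then obtain T \<sigma> where "P = PP en (T, \<sigma>)" "\<sigma> permutes {..<length en}" by (auto simp: \<Omega>_def)
    thus "P \<in> {P. perfect_matching (pts en) P}" using PP_pm[OF g] by auto
  qed
  have "(\<Sum>T\<in>Pow {..<length en}. \<Sum>\<sigma>\<in>{\<sigma>. \<sigma> permutes {..<length en}}.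
            real_of_int (sign \<sigma>) * (\<Prod>i<length en. Y (uu en T i) (vv en T (\<sigma> i))))
      = (\<Sum>T\<in>Pow {..<length en}. \<Sum>\<sigma>\<in>{\<sigma>. \<sigma> permutes {..<length en}}. h (T, \<sigma>))"
    by (intro sum.cong refl) (auto simp: h_def prod_PP[where Ch=Ch and Y=Y, OF g _ Ch])
  also have "\<dots> = (\<Sum>z\<in>\<Omega>. h z)"
    unfolding \<Omega>_def using sum.cartesian_product[where g="\<lambda>T \<sigma>. h (T, \<sigma>)" and A="Pow {..<length en}" and B="{\<sigma>. \<sigma> permutes {..<length en}}"]
    by (simp add: case_prod_eta)
  also have "\<dots> = (\<Sum>P\<in>{P. perfect_matching (pts en) P}. \<Sum>z\<in>{z \<in> \<Omega>. PP en z = P}. h z)"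
    by (rule sum.group[OF finO finPM img, symmetric])
  also have "\<dots> = (\<Sum>P\<in>{P. perfect_matching (pts en) P}. wt (length en) (c2 (pts en) P (Mof en)) * (\<Prod>p\<in>P. Ch p))"
  proof (rule sum.cong[OF refl])
    fix P assume "P \<in> {P. perfect_matching (pts en) P}"
    hence pm: "perfect_matching (pts en) P" by simp
    have "(\<Sum>z\<in>{z \<in> \<Omega>. PP en z = P}. h z) = (\<Sum>z\<in>fib en P. real_of_int (sign (snd z)) * (\<Prod>p\<in>P. Ch p))"
      unfolding \<Omega>_def PP_fib[OF g pm, symmetric] by (intro sum.cong refl) (auto simp: h_def)
    also have "\<dots> = (\<Sum>z\<in>fib en P. real_of_int (sign (snd z))) * (\<Prod>p\<in>P. Ch p)"
      by (simp add: sum_distrib_right)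
    also have "\<dots> = wt (length en) (c2 (pts en) P (Mof en)) * (\<Prod>p\<in>P. Ch p)"
      using core[OF g pm] by simp
    finally show "(\<Sum>z\<in>{z \<in> \<Omega>. PP en z = P}. h z) = wt (length en) (c2 (pts en) P (Mof en)) * (\<Prod>p\<in>P. Ch p)" .
  qed
  finally show ?thesis .
qed

definition DD :: "('w \<times> 'w) list \<Rightarrow> ('w \<Rightarrow> 'w \<Rightarrow> real) \<Rightarrow> nat set \<Rightarrow> real" where
  "DD en Y T = (\<Sum>\<sigma>\<in>{\<sigma>. \<sigma> permutes {..<length en}}.
      real_of_int (sign \<sigma>) * (\<Prod>i<length en. Y (uu en T i) (vv en T (\<sigma> i))))"

lemma DD_compl:
  assumes sym: "\<And>x y. Y x y = Y y x"
  shows "DD en Y ({..<length en} - T) = DD en Y T"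
proof -
  define L where "L = length en"
  have u: "uu en ({..<L} - T) i = vv en T i" if "i < L" for i using that by (simp add: uu_def vv_def)
  have v: "vv en ({..<L} - T) i = uu en T i" if "i < L" for i using that by (simp add: uu_def vv_def)
  define G where "G = (\<lambda>\<tau>. \<Prod>j<L. Y (uu en T j) (vv en T (\<tau> j)))"
  have step: "(\<Prod>i<L. Y (uu en ({..<L} - T) i) (vv en ({..<L} - T) (\<sigma> i))) = G (inv \<sigma>)"
    if s: "\<sigma> permutes {..<L}" for \<sigma>
  proof -
    have "(\<Prod>i<L. Y (uu en ({..<L} - T) i) (vv en ({..<L} - T) (\<sigma> i)))
        = (\<Prod>i<L. Y (vv en T i) (uu en T (\<sigma> i)))"
      by (rule prod.cong[OF refl]) (simp add: u v perm_lt[OF s])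
    also have "\<dots> = (\<Prod>j<L. Y (vv en T (inv \<sigma> j)) (uu en T (\<sigma> (inv \<sigma> j))))"
    proof -
      have b: "bij_betw (inv \<sigma>) {..<L} {..<L}" using permutes_imp_bij[OF permutes_inv[OF s]] .
      show ?thesis
        using prod.reindex_bij_betw[OF b, of "\<lambda>i. Y (vv en T i) (uu en T (\<sigma> i))"] by simp
    qed
    also have "\<dots> = G (inv \<sigma>)"
      unfolding G_def by (rule prod.cong[OF refl]) (simp add: permutes_inverses(1)[OF s] sym)
    finally show ?thesis .
  qed
  have "DD en Y ({..<L} - T) = (\<Sum>\<sigma>\<in>{\<sigma>. \<sigma> permutes {..<L}}. real_of_int (sign (inv \<sigma>)) * G (inv \<sigma>))"
    unfolding DD_def L_def[symmetric]
  proof (rule sum.cong[OF refl])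
    fix \<sigma> assume "\<sigma> \<in> {\<sigma>. \<sigma> permutes {..<L}}"
    hence s: "\<sigma> permutes {..<L}" by simp
    have "sign (inv \<sigma>) = sign \<sigma>" by (rule sign_inverse) (rule permutes_imp_permutation[OF _ s], simp)
    thus "real_of_int (sign \<sigma>) * (\<Prod>i<L. Y (uu en ({..<L} - T) i) (vv en ({..<L} - T) (\<sigma> i)))
        = real_of_int (sign (inv \<sigma>)) * G (inv \<sigma>)" using step[OF s] by simp
  qed
  also have "\<dots> = (\<Sum>\<tau>\<in>{\<sigma>. \<sigma> permutes {..<L}}. real_of_int (sign \<tau>) * G \<tau>)"
  proof (rule sum.reindex_bij_witness[where i=inv and j=inv])
    fix a assume "a \<in> {\<sigma>. \<sigma> permutes {..<L}}"
    hence a: "a permutes {..<L}" by simp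
    show "inv (inv a) = a" using permutes_inv_inv[OF a] .
    show "inv a \<in> {\<sigma>. \<sigma> permutes {..<L}}" using permutes_inv[OF a] by simp
    show "real_of_int (sign (inv a)) * G (inv a) = real_of_int (sign (inv a)) * G (inv a)" ..
  next
    fix b assume "b \<in> {\<sigma>. \<sigma> permutes {..<L}}"
    hence b: "b permutes {..<L}" by simp
    show "inv (inv b) = b" using permutes_inv_inv[OF b] .
    show "inv b \<in> {\<sigma>. \<sigma> permutes {..<L}}" using permutes_inv[OF b] by simp
  qed
  also have "\<dots> = DD en Y T" unfolding DD_def G_def L_def by simp
  finally show ?thesis by (simp add: L_def)
qed

lemma card1_pair: "a \<noteq> b \<Longrightarrow> card ({a,b} \<inter> U) = 1 \<Longrightarrow> (a \<in> U) \<noteq> (b \<in> U)"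
  by (cases "a \<in> U"; cases "b \<in> U") (auto simp: Int_insert_left)

locale mainctx =
  fixes W :: "'w set" and M :: "'w set set" and enum :: "('w \<times> 'w) list" and N :: nat
  assumes fin: "finite W" and cardW: "card W = 2 * N" and pmM: "perfect_matching W M"
    and dist: "distinct (map (\<lambda>(a, b). {a, b}) enum)"
    and setM: "set (map (\<lambda>(a, b). {a, b}) enum) = M"
    and len: "length enum = N" and N1: "N \<ge> 1"
begin

lemma Mof_enum: "Mof enum = M" using setM by (simp add: Mof_def)

lemma gg_M: "p \<in> set enum \<Longrightarrow> {fst p, snd p} \<in> M"
  using setM by (auto simp: case_prod_beta)

lemma fs_ne: "p \<in> set enum \<Longrightarrow> fst p \<noteq> snd p"
  using pm_card[OF pmM gg_M] by fastforce

lemma gg_inj: "p \<in> set enum \<Longrightarrow> q \<in> set enum \<Longrightarrow> {fst p, snd p} = {fst q, snd q} \<Longrightarrow> p = q"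
proof -
  assume pq: "p \<in> set enum" "q \<in> set enum" "{fst p, snd p} = {fst q, snd q}"
  have "inj_on (\<lambda>(a, b). {a, b}) (set enum)" using dist by (simp add: distinct_map)
  thus "p = q" using pq by (auto simp: inj_on_def case_prod_beta)
qed

lemma good_enum: "good enum"
proof -
  have de: "distinct enum" using dist by (simp add: distinct_map)
  have share: "p = q" if "p \<in> set enum" "q \<in> set enum" "w \<in> {fst p, snd p}" "w \<in> {fst q, snd q}" for p q w
    using gg_inj[OF that(1,2)] pm_unique[OF pmM gg_M[OF that(1)] gg_M[OF that(2)] that(3,4)] by simp
  have i1: "inj_on fst (set enum)" by (rule inj_onI) (use share in blast)
  have i2: "inj_on snd (set enum)" by (rule inj_onI) (use share in blast)
  have d: "set (map fst enum) \<inter> set (map snd enum) = {}"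
  proof (rule ccontr)
    assume "set (map fst enum) \<inter> set (map snd enum) \<noteq> {}"
    then obtain p q where pq: "p \<in> set enum" "q \<in> set enum" "fst p = snd q" by auto
    hence "p = q" using share[OF pq(1,2), of "fst p"] by simp
    thus False using pq fs_ne by auto
  qed
  show ?thesis unfolding good_def using de i1 i2 d by (simp add: distinct_map)
qed

lemma pts_enum: "pts enum = W"
proof
  show "pts enum \<subseteq> W" using pm_sub[OF pmM gg_M] by (force simp: pts_def)
  show "W \<subseteq> pts enum"
  proof
    fix w assume "w \<in> W"
    then obtain p where p: "p \<in> M" "w \<in> p" using pm_ex[OF pmM] by blast
    then obtain q where "q \<in> set enum" "p = {fst q, snd q}" using setM by (auto simp: case_prod_beta)
    thus "w \<in> pts enum" using p by (auto simp: pts_def)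
  qed
qed

definition "transv U \<longleftrightarrow> U \<subseteq> W \<and> (\<forall>i<N. (fst (enum!i) \<in> U) \<noteq> (snd (enum!i) \<in> U))"
definition "UT T = uu enum T ` {..<N}"
definition "TofU U = {i. i < N \<and> snd (enum!i) \<in> U}"
definition "sp T = {UT T, W - UT T}"

lemma nth_enum: "i < N \<Longrightarrow> enum ! i \<in> set enum" using len by simp
lemma fst_W: "i < N \<Longrightarrow> fst (enum!i) \<in> W" using pts_enum nth_enum by (force simp: pts_def)
lemma snd_W: "i < N \<Longrightarrow> snd (enum!i) \<in> W" using pts_enum nth_enum by (force simp: pts_def)

lemma UT_transv: "transv (UT T)"
  unfolding transv_def
proof (intro conjI allI impI)
  show "UT T \<subseteq> W" using uu_pts pts_enum len by (auto simp: UT_def)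
  fix i assume i: "i < N"
  have "uu enum T i \<in> UT T" using i by (auto simp: UT_def)
  moreover have "vv enum T i \<notin> UT T"
  proof
    assume "vv enum T i \<in> UT T"
    then obtain j where j: "j < N" "vv enum T i = uu enum T j" by (auto simp: UT_def)
    thus False using uv_ne[OF good_enum, of j i T] len i by auto
  qed
  ultimately show "(fst (enum!i) \<in> UT T) \<noteq> (snd (enum!i) \<in> UT T)"
    by (cases "i \<in> T") (auto simp: uu_def vv_def)
qed

lemma UT_eq:
  assumes U: "transv U" and T: "T \<subseteq> {..<N}"
  shows "UT T = U \<longleftrightarrow> T = TofU U"
proof
  assume e: "UT T = U"
  show "T = TofU U"
  proof (intro equalityI subsetI)
    fix i assume i: "i \<in> T"
    hence "i < N" using T by auto
    moreover have "uu enum T i \<in> U" using e \<open>i < N\<close> by (auto simp: UT_def)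
    ultimately show "i \<in> TofU U" using i by (simp add: TofU_def uu_def)
  next
    fix i assume i: "i \<in> TofU U"
    hence iN: "i < N" and s: "snd (enum!i) \<in> U" by (auto simp: TofU_def)
    show "i \<in> T"
    proof (rule ccontr)
      assume "i \<notin> T"
      hence "fst (enum!i) \<in> U" using e iN by (force simp: UT_def uu_def)
      thus False using s U iN by (auto simp: transv_def)
    qed
  qed
next
  assume e: "T = TofU U"
  show "UT T = U"
  proof (intro equalityI subsetI)
    fix w assume "w \<in> UT T"
    then obtain i where i: "i < N" "w = uu enum T i" by (auto simp: UT_def)
    show "w \<in> U"
    proof (cases "i \<in> T")
      case True thus ?thesis using i e by (simp add: uu_def TofU_def)
    next
      case False
      hence "snd (enum!i) \<notin> U" using i e by (simp add: TofU_def)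
      hence "fst (enum!i) \<in> U" using U i by (auto simp: transv_def)
      thus ?thesis using i False by (simp add: uu_def)
    qed
  next
    fix w assume w: "w \<in> U"
    hence "w \<in> pts enum" using U pts_enum by (auto simp: transv_def)
    then obtain i where i: "i < N" "w = fst (enum!i) \<or> w = snd (enum!i)"
      using len by (auto simp: pts_def in_set_conv_nth)
    show "w \<in> UT T"
    proof (cases "w = snd (enum!i)")
      case True
      hence "i \<in> T" using e w i by (simp add: TofU_def)
      hence "uu enum T i = w" using True by (simp add: uu_def)
      thus ?thesis using i by (auto simp: UT_def)
    next
      case False
      hence wf: "w = fst (enum!i)" using i by auto
      hence "snd (enum!i) \<notin> U" using U i w by (auto simp: transv_def)
      hence "i \<notin> T" using e by (simp add: TofU_def)
      hence "uu enum T i = w" using wf by (simp add: uu_def)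
      thus ?thesis using i by (auto simp: UT_def)
    qed
  qed
qed

lemma transv_card:
  assumes U: "transv U" and p: "p \<in> M"
  shows "card (p \<inter> U) = 1 \<and> card (p \<inter> (W - U)) = 1"
proof -
  obtain q where q: "q \<in> set enum" "p = {fst q, snd q}" using p setM by (auto simp: case_prod_beta)
  then obtain i where i: "i < N" "enum ! i = q" using len by (auto simp: in_set_conv_nth)
  have ne: "fst q \<noteq> snd q" using fs_ne[OF q(1)] .
  have x: "(fst q \<in> U) \<noteq> (snd q \<in> U)" using U i by (auto simp: transv_def)
  have W: "fst q \<in> W" "snd q \<in> W" using fst_W[OF i(1)] snd_W[OF i(1)] i by auto
  show ?thesis
  proof (cases "fst q \<in> U")
    case True
    hence "p \<inter> U = {fst q}" "p \<inter> (W - U) = {snd q}" using x q W ne by auto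
    thus ?thesis by simp
  next
    case False
    hence "p \<inter> U = {snd q}" "p \<inter> (W - U) = {fst q}" using x q W ne by auto
    thus ?thesis by simp
  qed
qed

lemma card_UT: "card (UT T) = N"
proof -
  have "inj_on (uu enum T) {..<N}" by (rule inj_onI) (use uu_inj[OF good_enum] len in auto)
  thus ?thesis by (simp add: UT_def card_image)
qed

lemma sp_splits: "sp T \<in> splits W M N"
proof -
  have sub: "UT T \<subseteq> W" using UT_transv by (simp add: transv_def)
  have c2: "card (W - UT T) = N" using card_Diff_subset[OF finite_subset[OF sub fin] sub] cardW card_UT by simp
  have d: "UT T \<inter> (W - UT T) = {}" by blast
  have u: "UT T \<union> (W - UT T) = W" using sub by blast
  have P: "UT T \<inter> (W - UT T) = {} \<and> UT T \<union> (W - UT T) = W \<and> card (UT T) = N \<and> card (W - UT T) = N \<and>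
      (\<forall>p\<in>M. card (p \<inter> UT T) = 1 \<and> card (p \<inter> (W - UT T)) = 1)"
    using d u card_UT c2 transv_card[OF UT_transv] by simp
  show ?thesis unfolding splits_def sp_def
    by (rule CollectI, rule exI[where x="UT T"], rule exI[where x="W - UT T"]) (use P in simp)
qed

lemma splits_struct:
  assumes S: "S \<in> splits W M N" and U: "U \<in> S"
  shows "transv U \<and> S = {U, W - U}"
proof -
  obtain U1 U2 where S': "S = {U1, U2}" "U1 \<inter> U2 = {}" "U1 \<union> U2 = W"
    and c: "\<forall>p\<in>M. card (p \<inter> U1) = 1 \<and> card (p \<inter> U2) = 1"
    using S unfolding splits_def by (auto simp only: mem_Collect_eq)
  have U12: "U = U1 \<or> U = U2" using U S'(1) by blast
  have cU: "\<forall>p\<in>M. card (p \<inter> U) = 1" using c U12 by blast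
  have W1: "W - U1 = U2" using S'(2,3) by blast
  have W2: "W - U2 = U1" using S'(2,3) by blast
  have SU: "S = {U, W - U}" using U12 S'(1) W1 W2 by blast
  have "U \<subseteq> W" using U12 S'(3) by blast
  moreover have "(fst (enum!i) \<in> U) \<noteq> (snd (enum!i) \<in> U)" if i: "i < N" for i
  proof -
    have q: "enum ! i \<in> set enum" using nth_enum[OF i] .
    show ?thesis using card1_pair[OF fs_ne[OF q] cU[rule_format, OF gg_M[OF q]]] .
  qed
  ultimately show ?thesis using SU by (simp add: transv_def)
qed

end

lemma cycpoly_sym: "cycpoly V E ends \<alpha> e f = cycpoly V E ends \<alpha> f e"
  unfolding cycpoly_def by (simp add: mult.commute)

lemma chord_chi_pair:
  assumes "x \<noteq> y"
  shows "chord_chi V E ends \<alpha> lab {x, y} = cycpoly V E ends \<alpha> (lab x) (lab y)"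
proof -
  define ab where "ab = (SOME ab. {x, y} = {fst ab, snd ab} \<and> fst ab \<noteq> snd ab)"
  have "\<exists>ab. {x, y} = {fst ab, snd ab} \<and> fst ab \<noteq> snd ab" using assms by (intro exI[of _ "(x,y)"]) auto
  hence h: "{x, y} = {fst ab, snd ab} \<and> fst ab \<noteq> snd ab" unfolding ab_def by (rule someI_ex)
  hence "(fst ab = x \<and> snd ab = y) \<or> (fst ab = y \<and> snd ab = x)" by (auto simp: doubleton_eq_iff)
  hence "cycpoly V E ends \<alpha> (lab (fst ab)) (lab (snd ab)) = cycpoly V E ends \<alpha> (lab x) (lab y)"
    using cycpoly_sym by metis
  thus ?thesis unfolding chord_chi_def ab_def[symmetric] Let_def .
qed

context mainctx
begin

lemma transv_compl: "transv U \<Longrightarrow> transv (W - U)"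
  unfolding transv_def using fst_W snd_W by auto

lemma TofU_compl: "transv U \<Longrightarrow> TofU (W - U) = {..<N} - TofU U"
  unfolding TofU_def using snd_W by auto

lemma TofU_sub: "TofU U \<subseteq> {..<N}" by (auto simp: TofU_def)

lemma some_in: "S \<in> splits W M N \<Longrightarrow> (SOME U. U \<in> S) \<in> S"
proof -
  assume "S \<in> splits W M N"
  then obtain U U' where "S = {U, U'}" unfolding splits_def by blast
  hence "\<exists>U. U \<in> S" by blast
  thus ?thesis by (rule someI_ex)
qed

lemma sp_fiber:
  assumes S: "S \<in> splits W M N"
  defines "U0 \<equiv> SOME U. U \<in> S"
  shows "{T \<in> Pow {..<N}. sp T = S} = {TofU U0, {..<N} - TofU U0}"
proof -
  have U0S: "U0 \<in> S" using some_in[OF S] by (simp add: U0_def)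
  have tr: "transv U0" and SU: "S = {U0, W - U0}" using splits_struct[OF S U0S] by auto
  have U0W: "U0 \<subseteq> W" using tr by (simp add: transv_def)
  have trc: "transv (W - U0)" using transv_compl[OF tr] .
  have key: "sp T = S \<longleftrightarrow> UT T = U0 \<or> UT T = W - U0" for T
  proof
    assume "sp T = S"
    hence "UT T \<in> {U0, W - U0}" using SU by (auto simp: sp_def)
    thus "UT T = U0 \<or> UT T = W - U0" by auto
  next
    assume "UT T = U0 \<or> UT T = W - U0"
    moreover have "W - (W - U0) = U0" using U0W by auto
    ultimately show "sp T = S" using SU by (auto simp: sp_def)
  qed
  show ?thesis
  proof (intro equalityI subsetI)
    fix T assume "T \<in> {T \<in> Pow {..<N}. sp T = S}"
    hence T: "T \<subseteq> {..<N}" and "UT T = U0 \<or> UT T = W - U0" using key by auto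
    hence "T = TofU U0 \<or> T = TofU (W - U0)" using UT_eq[OF tr T] UT_eq[OF trc T] by blast
    thus "T \<in> {TofU U0, {..<N} - TofU U0}" using TofU_compl[OF tr] by auto
  next
    fix T assume "T \<in> {TofU U0, {..<N} - TofU U0}"
    hence "T = TofU U0 \<or> T = TofU (W - U0)" using TofU_compl[OF tr] by auto
    moreover have "TofU U0 \<subseteq> {..<N}" "TofU (W - U0) \<subseteq> {..<N}" by (rule TofU_sub)+
    ultimately have T: "T \<subseteq> {..<N}" and "UT T = U0 \<or> UT T = W - U0"
      using UT_eq[OF tr] UT_eq[OF trc] by blast+
    thus "T \<in> {T \<in> Pow {..<N}. sp T = S}" using key by auto
  qed
qed

lemma TofU_ne: "TofU U \<noteq> {..<N} - TofU U"
proof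
  assume e: "TofU U = {..<N} - TofU U"
  have "0 < N" using N1 by simp
  thus False using e by blast
qed

lemma finite_splits: "finite (splits W M N)"
proof (rule finite_subset)
  show "splits W M N \<subseteq> Pow (Pow W)" unfolding splits_def by auto
  show "finite (Pow (Pow W))" using fin by simp
qed

lemma sum_splits:
  fixes f :: "nat set \<Rightarrow> real"
  assumes sym: "\<And>T. f ({..<N} - T) = f T"
  shows "(\<Sum>T\<in>Pow {..<N}. f T) = 2 * (\<Sum>S\<in>splits W M N. f (TofU (SOME U. U \<in> S)))"
proof -
  have "(\<Sum>T\<in>Pow {..<N}. f T) = (\<Sum>S\<in>splits W M N. \<Sum>T\<in>{T \<in> Pow {..<N}. sp T = S}. f T)"
    by (rule sum.group[symmetric]) (use finite_splits sp_splits in auto)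
  also have "\<dots> = (\<Sum>S\<in>splits W M N. 2 * f (TofU (SOME U. U \<in> S)))"
  proof (rule sum.cong[OF refl])
    fix S assume S: "S \<in> splits W M N"
    define T0 where "T0 = TofU (SOME U. U \<in> S)"
    have "(\<Sum>T\<in>{T \<in> Pow {..<N}. sp T = S}. f T) = (\<Sum>T\<in>{T0, {..<N} - T0}. f T)"
      using sp_fiber[OF S] by (simp add: T0_def)
    also have "\<dots> = f T0 + f ({..<N} - T0)" using TofU_ne by (simp add: T0_def)
    also have "\<dots> = 2 * f T0" using sym by simp
    finally show "(\<Sum>T\<in>{T \<in> Pow {..<N}. sp T = S}. f T) = 2 * f (TofU (SOME U. U \<in> S))"
      by (simp add: T0_def)
  qed
  finally show ?thesis by (simp add: sum_distrib_left)
qed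

lemma dodgson_eq:
  assumes S: "S \<in> splits W M N"
  shows "dodgson V E ends \<alpha> (rep_u lab enum S) (rep_v lab enum S)
       = kirchhoff V E ends \<alpha> powi (1 - int N) *
         DD enum (\<lambda>x y. cycpoly V E ends \<alpha> (lab x) (lab y)) (TofU (SOME U. U \<in> S))"
proof -
  define U0 where "U0 = (SOME U. U \<in> S)"
  define T0 where "T0 = TofU U0"
  have U0S: "U0 \<in> S" using some_in[OF S] by (simp add: U0_def)
  have tr: "transv U0" using splits_struct[OF S U0S] by auto
  have ru: "rep_u lab enum S = map (\<lambda>(a, b). if a \<in> U0 then lab a else lab b) enum"
    by (simp add: rep_u_def U0_def)
  have rv: "rep_v lab enum S = map (\<lambda>(a, b). if a \<in> U0 then lab b else lab a) enum"
    by (simp add: rep_v_def U0_def)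
  have lu: "length (rep_u lab enum S) = N" using len ru by simp
  have nu: "rep_u lab enum S ! i = lab (uu enum T0 i)" if i: "i < N" for i
  proof -
    have x: "(fst (enum!i) \<in> U0) \<noteq> (snd (enum!i) \<in> U0)" using tr i by (simp add: transv_def)
    show ?thesis using i len x unfolding ru by (auto simp: uu_def T0_def TofU_def case_prod_beta)
  qed
  have nv: "rep_v lab enum S ! i = lab (vv enum T0 i)" if i: "i < N" for i
  proof -
    have x: "(fst (enum!i) \<in> U0) \<noteq> (snd (enum!i) \<in> U0)" using tr i by (simp add: transv_def)
    show ?thesis using i len x unfolding rv by (auto simp: vv_def T0_def TofU_def case_prod_beta)
  qed
  have "dodgson V E ends \<alpha> (rep_u lab enum S) (rep_v lab enum S)
      = kirchhoff V E ends \<alpha> powi (1 - int N) *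
        (\<Sum>\<sigma>\<in>{\<sigma>. \<sigma> permutes {..<N}}. of_int (sign \<sigma>) *
          (\<Prod>i<N. cycpoly V E ends \<alpha> (rep_u lab enum S ! i) (rep_v lab enum S ! \<sigma> i)))"
    unfolding dodgson_def lu ..
  also have "\<dots> = kirchhoff V E ends \<alpha> powi (1 - int N) *
        DD enum (\<lambda>x y. cycpoly V E ends \<alpha> (lab x) (lab y)) T0"
    unfolding DD_def len
  proof (intro arg_cong2[where f="(*)"] refl sum.cong arg_cong2[where f="(*)"] prod.cong)
    fix \<sigma> i assume s: "\<sigma> \<in> {\<sigma>. \<sigma> permutes {..<N}}" and i: "i \<in> {..<N}"
    have si: "\<sigma> i < N" using perm_lt[of \<sigma> N i] s i by auto
    show "cycpoly V E ends \<alpha> (rep_u lab enum S ! i) (rep_v lab enum S ! \<sigma> i)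
        = cycpoly V E ends \<alpha> (lab (uu enum T0 i)) (lab (vv enum T0 (\<sigma> i)))"
      using nu i nv si by simp
  qed
  finally show ?thesis by (simp add: T0_def U0_def)
qed

end

theorem mainTheorem3:
  fixes V :: "'v set" and E :: "'e set" and ends :: "'e \<Rightarrow> 'v \<times> 'v"
    and W :: "'w set" and lab :: "'w \<Rightarrow> 'e" and B1 B2 :: "'w set set"
    and j :: nat and enum :: "('w \<times> 'w) list" and \<alpha> :: "'e \<Rightarrow> real" and N :: nat
  assumes "finite V" and "finite E"
    and "\<forall>e\<in>E. fst (ends e) \<in> V \<and> snd (ends e) \<in> V"
    and "graph_connected V E ends"
    and "N = betti1 V E ends" and "N \<ge> 1"
    and "finite W" and "card W = 2 * N"
    and "perfect_matching W B1" and "perfect_matching W B2"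
    and "inj_on lab W" and "lab ` W \<subseteq> E"
    and "j \<in> {1, 2}"
    and "length enum = N"
    and "distinct (map (\<lambda>(a, b). {a, b}) enum)"
    and "set (map (\<lambda>(a, b). {a, b}) enum) = (if j = 1 then B1 else B2)"
  shows "(\<Sum>S\<in>splits W (if j = 1 then B1 else B2) N.
            dodgson V E ends \<alpha> (rep_u lab enum S) (rep_v lab enum S))
       = (- kirchhoff V E ends \<alpha>) powi (1 - int N) *
         (\<Sum>P\<in>{P. perfect_matching W P}.
            (-2) powi (int (c2 W P (if j = 1 then B1 else B2)) - 1) *
            (\<Prod>p\<in>P. chord_chi V E ends \<alpha> lab p))"
proof -
  define M where "M = (if j = 1 then B1 else B2)"
  have pmM: "perfect_matching W M" using assms(9,10,13) by (auto simp: M_def)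
  interpret mc: mainctx W M enum N
  proof
    show "finite W" "card W = 2 * N" "perfect_matching W M" "length enum = N" "N \<ge> 1"
      using assms pmM by auto
    show "distinct (map (\<lambda>(a, b). {a, b}) enum)" using assms(15) .
    show "set (map (\<lambda>(a, b). {a, b}) enum) = M" using assms(16) by (simp add: M_def)
  qed
  define Y where "Y = (\<lambda>x y. cycpoly V E ends \<alpha> (lab x) (lab y))"
  define Ch where "Ch = chord_chi V E ends \<alpha> lab"
  define \<Psi> where "\<Psi> = kirchhoff V E ends \<alpha>"
  have Ch: "\<And>x y. x \<noteq> y \<Longrightarrow> Ch {x, y} = Y x y" unfolding Ch_def Y_def by (rule chord_chi_pair)
  have symY: "\<And>x y. Y x y = Y y x" unfolding Y_def by (rule cycpoly_sym)
  have B: "(\<Sum>T\<in>Pow {..<N}. DD enum Y T)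
      = (\<Sum>P\<in>{P. perfect_matching W P}. wt N (c2 W P M) * (\<Prod>p\<in>P. Ch p))"
    using stepB[where Ch=Ch and Y=Y, OF mc.good_enum Ch] unfolding mc.pts_enum mc.Mof_enum assms(14) DD_def .
  have Sp: "(\<Sum>T\<in>Pow {..<N}. DD enum Y T) = 2 * (\<Sum>S\<in>splits W M N. DD enum Y (mc.TofU (SOME U. U \<in> S)))"
    by (rule mc.sum_splits) (use DD_compl[OF symY, of enum] assms(14) in simp)
  have "(\<Sum>S\<in>splits W M N. dodgson V E ends \<alpha> (rep_u lab enum S) (rep_v lab enum S))
      = (\<Sum>S\<in>splits W M N. \<Psi> powi (1 - int N) * DD enum Y (mc.TofU (SOME U. U \<in> S)))"
    by (rule sum.cong[OF refl]) (simp add: mc.dodgson_eq \<Psi>_def Y_def)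
  also have "\<dots> = \<Psi> powi (1 - int N) * (\<Sum>S\<in>splits W M N. DD enum Y (mc.TofU (SOME U. U \<in> S)))"
    by (simp add: sum_distrib_left)
  also have "\<dots> = \<Psi> powi (1 - int N) * ((\<Sum>P\<in>{P. perfect_matching W P}. wt N (c2 W P M) * (\<Prod>p\<in>P. Ch p)) / 2)"
    using B Sp by simp
  also have "\<dots> = (- \<Psi>) powi (1 - int N) *
         (\<Sum>P\<in>{P. perfect_matching W P}. (-2) powi (int (c2 W P M) - 1) * (\<Prod>p\<in>P. Ch p))"
  proof -
    have m1: "(- \<Psi>) powi (1 - int N) = (-1) powi (int N - 1) * \<Psi> powi (1 - int N)"
    proof -
      have "(- \<Psi>) powi (1 - int N) = ((-1) * \<Psi>) powi (1 - int N)" by simp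
      also have "\<dots> = (-1) powi (1 - int N) * \<Psi> powi (1 - int N)" by (rule power_int_mult_distrib)
      also have "(-1::real) powi (1 - int N) = (-1) powi (int N - 1)" by (rule power_int_minus_one_diff_commute)
      finally show ?thesis .
    qed
    have w: "wt N c / 2 = (-1) powi (int N - 1) * (-2) powi (int c - 1)" for c by (simp add: wt_def)
    have "(\<Sum>P\<in>{P. perfect_matching W P}. wt N (c2 W P M) * (\<Prod>p\<in>P. Ch p)) / 2
        = (-1) powi (int N - 1) * (\<Sum>P\<in>{P. perfect_matching W P}. (-2) powi (int (c2 W P M) - 1) * (\<Prod>p\<in>P. Ch p))"
    proof -
      have t: "wt N c * X / 2 = (-1) powi (int N - 1) * ((-2) powi (int c - 1) * X)" for c X
      proof -
        have "wt N c * X / 2 = (wt N c / 2) * X" by simp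
        also have "\<dots> = (-1) powi (int N - 1) * ((-2) powi (int c - 1) * X)" unfolding w by simp
        finally show ?thesis .
      qed
      show ?thesis by (simp add: sum_divide_distrib sum_distrib_left t)
    qed
    thus ?thesis using m1 by (simp add: mult.assoc mult.left_commute)
  qed
  finally show ?thesis by (simp add: M_def \<Psi>_def Ch_def)
qed

end
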